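(* Let $E\subset\mathbb{R}^{n+1}$ be closed, $\Omega:=\mathbb{R}^{n+1}\setminus E$, $\delta(X):=\operatorname{dist}(X,E)$. Let $G_0\in\mathrm{BV}_{\mathrm{loc}}(\Omega)$ be such that $\mu:=|\nabla G_0(Y)|\,dY$ is a Carleson measure with Carleson norm $C_\mu$, and let $G$ be the regularization of $G_0$ defined below. Then $|\nabla G(Y)|\,dY$ is a Carleson measure, and $$\sup_{r>0,\,z\in E}\frac{1}{r^n}\iint_{B(z,r)\cap\Omega}|\nabla G(X)|\,dX\le C\,C_\mu,$$ with $C$ depending only on $n$ and the choices of $\beta$ and $\zeta$.
   Context: Let $\beta:\Omega\to(0,\infty)$ be smooth with $m_1\delta\le\beta\le m_2\delta$ and $|\partial^\alpha\beta|\le C_\alpha\beta^{1-|\alpha|}$ for all multi-indices $\alpha$. Let $\zeta\ge0$ be smooth, supported in $B(0,\tfrac1{2m_2})$, $\zeta\le1$, $\int\zeta=1$. Define $G(X):=\iint\beta(X)^{-n-1}\zeta((X-Y)/\beta(X))\,G_0(Y)\,dY$. $\mu$ is a Carleson measure if $C_\mu:=\sup_{x\in E,r>0}\mu(B(x,r)\cap\Omega)/r^n<\infty$. $\mathrm{BV}_{\mathrm{loc}}(\Omega)$: locally integrable functions with finite total variation on every relatively compact open subset; $|\nabla G_0|\,dY$ is the total variation measure. *)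

theory Defs
  imports "HOL-Analysis.Analysis"
begin

text \<open>With directions from Basis this
  covers all partial derivatives of multi-index order k.\<close>
fun iderv :: "('a::real_normed_vector \<Rightarrow> real) \<Rightarrow> 'a list \<Rightarrow> 'a \<Rightarrow> real" where
  "iderv f [] = f"
| "iderv f (v # vs) = (\<lambda>X. frechet_derivative (iderv f vs) (at X) v)"

definition smooth_on :: "'a::euclidean_space set \<Rightarrow> ('a \<Rightarrow> real) \<Rightarrow> bool" where
  "smooth_on S f \<longleftrightarrow> (\<forall>vs. set vs \<subseteq> Basis \<longrightarrow> (\<forall>X\<in>S. iderv f vs differentiable (at X)))"

definition divergence :: "('a::euclidean_space \<Rightarrow> 'a) \<Rightarrow> 'a \<Rightarrow> real" where
  "divergence \<phi> X = (\<Sum>b\<in>Basis. frechet_derivative \<phi> (at X) b \<bullet> b)"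

definition grad :: "('a::euclidean_space \<Rightarrow> real) \<Rightarrow> 'a \<Rightarrow> 'a" where
  "grad f X = (\<Sum>b\<in>Basis. frechet_derivative f (at X) b *\<^sub>R b)"

definition test_fields :: "'a::euclidean_space set \<Rightarrow> ('a \<Rightarrow> 'a) set" where
  "test_fields U = {\<phi>. (\<forall>X. \<phi> differentiable (at X))
      \<and> (\<forall>b\<in>Basis. continuous_on UNIV (\<lambda>X. frechet_derivative \<phi> (at X) b))
      \<and> compact (closure {X. \<phi> X \<noteq> 0}) \<and> closure {X. \<phi> X \<noteq> 0} \<subseteq> U
      \<and> (\<forall>X. norm (\<phi> X) \<le> 1)}"

text \<open>Total variation of f on an open set U, i.e. the total variation measure
  |\<nabla>f|(U) (the value of the variation measure on the open set U).\<close>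
definition total_variation :: "('a::euclidean_space \<Rightarrow> real) \<Rightarrow> 'a set \<Rightarrow> ennreal" where
  "total_variation f U = (SUP \<phi>\<in>test_fields U. ennreal (integral\<^sup>L lborel (\<lambda>X. f X * divergence \<phi> X)))"

definition loc_integrable :: "'a::euclidean_space set \<Rightarrow> ('a \<Rightarrow> real) \<Rightarrow> bool" where
  "loc_integrable \<Omega> f \<longleftrightarrow> (\<forall>K. compact K \<and> K \<subseteq> \<Omega> \<longrightarrow> set_integrable lborel K f)"

definition BV_loc :: "'a::euclidean_space set \<Rightarrow> ('a \<Rightarrow> real) \<Rightarrow> bool" where
  "BV_loc \<Omega> f \<longleftrightarrow> loc_integrable \<Omega> f \<and>
     (\<forall>U. open U \<and> compact (closure U) \<and> closure U \<subseteq> \<Omega> \<longrightarrow> total_variation f U < \<infinity>)"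

text \<open>Carleson norm of a measure \<mu> (given by its values on sets) relative to E,
  in ambient dimension n+1 = DIM('a).\<close>
definition carleson_norm :: "'a::euclidean_space set \<Rightarrow> ('a set \<Rightarrow> ennreal) \<Rightarrow> ennreal" where
  "carleson_norm E \<mu> = (SUP x\<in>E. SUP r\<in>{0<..}.
      \<mu> (ball x r \<inter> (UNIV - E)) / ennreal (r ^ (DIM('a) - 1)))"

definition regularize :: "('a::euclidean_space \<Rightarrow> real) \<Rightarrow> ('a \<Rightarrow> real) \<Rightarrow> ('a \<Rightarrow> real) \<Rightarrow> 'a \<Rightarrow> real" where
  "regularize \<beta> \<zeta> G0 X = integral\<^sup>L lborel
     (\<lambda>Y. \<beta> X powr (- real DIM('a)) * \<zeta> ((1 / \<beta> X) *\<^sub>R (X - Y)) * G0 Y)"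

end

theory Submission
  imports Defs "HOL-Analysis.Analysis"
begin

lemma int_cm:
  fixes f g :: "'b::euclidean_space \<Rightarrow> real"
  assumes S: "compact S" and f: "continuous_on S f" and g: "integrable lborel g"
    and g0: "\<And>y. y \<notin> S \<Longrightarrow> g y = 0"
  shows "integrable lborel (\<lambda>y. f y * g y)"
proof -
  obtain B where B: "\<And>y. y \<in> S \<Longrightarrow> norm (f y) \<le> B"
    using compact_imp_bounded[OF compact_continuous_image[OF f S]] unfolding bounded_iff by auto
  have eq: "(\<lambda>y. f y * g y) = (\<lambda>y. (indicator S y *\<^sub>R f y) * g y)"
    using g0 by (auto simp: indicator_def fun_eq_iff)
  have m: "(\<lambda>y. indicator S y *\<^sub>R f y) \<in> borel_measurable lborel"
    using borel_measurable_continuous_on_indicator[OF _ f] S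
    by (simp add: compact_imp_closed borel_closed measurable_lborel1)
  show ?thesis unfolding eq
  proof (rule Bochner_Integration.integrable_bound[where f="\<lambda>y. B * g y"])
    show "integrable lborel (\<lambda>y. B * g y)" using g by simp
    show "(\<lambda>y. (indicator S y *\<^sub>R f y) * g y) \<in> borel_measurable lborel"
      using m borel_measurable_integrable[OF g] by measurable
    show "AE y in lborel. norm ((indicator S y *\<^sub>R f y) * g y) \<le> norm (B * g y)"
    proof (rule AE_I2)
      fix y show "norm ((indicator S y *\<^sub>R f y) * g y) \<le> norm (B * g y)"
      proof (cases "y \<in> S")
        case True
        then have "\<bar>f y\<bar> \<le> B" using B by auto
        then show ?thesis using True by (simp add: abs_mult mult_right_mono)
      next
        case False then show ?thesis using g0 by simp
      qed
    qed
  qed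
qed

lemma dui:
  fixes k :: "'a::euclidean_space \<Rightarrow> 'b::euclidean_space \<Rightarrow> real" and dk :: "'a \<Rightarrow> 'b \<Rightarrow> 'a"
    and g :: "'b \<Rightarrow> real"
  assumes U: "open U" and S: "compact S" and g: "integrable lborel g" and g0: "\<And>y. y \<notin> S \<Longrightarrow> g y = 0"
    and der: "\<And>x y. x \<in> U \<Longrightarrow> y \<in> S \<Longrightarrow> ((\<lambda>x. k x y) has_derivative (\<lambda>h. dk x y \<bullet> h)) (at x)"
    and cdk: "continuous_on (U \<times> S) (\<lambda>p. dk (fst p) (snd p))"
    and ck: "\<And>x. x \<in> U \<Longrightarrow> continuous_on S (k x)"
    and x0: "x0 \<in> U"
  shows "((\<lambda>x. \<integral>y. k x y * g y \<partial>lborel) has_derivative (\<lambda>h. \<integral>y. (dk x0 y \<bullet> h) * g y \<partial>lborel)) (at x0)"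
proof -
  obtain \<rho> where \<rho>: "\<rho> > 0" "cball x0 \<rho> \<subseteq> U" using open_contains_cball U x0 by blast
  have cdk0: "continuous_on S (\<lambda>y. dk x0 y)"
  proof -
    have "continuous_on S ((\<lambda>p. dk (fst p) (snd p)) \<circ> (\<lambda>y. (x0, y)))"
      apply (rule continuous_on_compose)
       apply (intro continuous_intros)
      apply (rule continuous_on_subset[OF cdk]) using x0 by auto
    then show ?thesis by (simp add: o_def)
  qed
  have intk: "integrable lborel (\<lambda>y. k x y * g y)" if "x \<in> U" for x
    by (rule int_cm[OF S ck[OF that] g g0])
  have intdk: "integrable lborel (\<lambda>y. (dk x0 y \<bullet> h) * g y)" for h
    by (rule int_cm[OF S _ g g0]) (auto intro!: continuous_intros cdk0)
  define v where "v = (\<Sum>b\<in>Basis. (\<integral>y. (dk x0 y \<bullet> b) * g y \<partial>lborel) *\<^sub>R b)"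
  have Lv: "(\<integral>y. (dk x0 y \<bullet> h) * g y \<partial>lborel) = v \<bullet> h" for h
  proof -
    have "(\<integral>y. (dk x0 y \<bullet> h) * g y \<partial>lborel) = (\<integral>y. (\<Sum>b\<in>Basis. (h \<bullet> b) * ((dk x0 y \<bullet> b) * g y)) \<partial>lborel)"
      by (rule Bochner_Integration.integral_cong[OF refl])
         (simp add: euclidean_inner[of "dk x0 _" h] sum_distrib_right sum_distrib_left mult_ac)
    also have "\<dots> = (\<Sum>b\<in>Basis. (h \<bullet> b) * (\<integral>y. (dk x0 y \<bullet> b) * g y \<partial>lborel))"
      using intdk by (simp add: Bochner_Integration.integral_sum)
    also have "\<dots> = v \<bullet> h"
      by (simp add: v_def inner_sum_left inner_sum_right mult_ac inner_commute)
    finally show ?thesis .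
  qed
  show ?thesis unfolding has_derivative_at_alt
  proof (intro conjI allI impI)
    show "bounded_linear (\<lambda>h. \<integral>y. (dk x0 y \<bullet> h) * g y \<partial>lborel)"
      unfolding Lv by (rule bounded_linear_inner_right)
    fix e :: real assume e: "e > 0"
    define I where "I = (\<integral>y. norm (g y) \<partial>lborel)"
    have I0: "I \<ge> 0" unfolding I_def by simp
    define e' where "e' = e / (I + 1)"
    have e': "e' > 0" using e I0 by (simp add: e'_def)
    have "uniformly_continuous_on (cball x0 \<rho> \<times> S) (\<lambda>p. dk (fst p) (snd p))"
      by (rule compact_uniformly_continuous[OF continuous_on_subset[OF cdk]])
         (use \<rho> S in \<open>auto intro: compact_Times\<close>)
    then obtain d where d: "d > 0" and dd: "\<And>p p'. p \<in> cball x0 \<rho> \<times> S \<Longrightarrow> p' \<in> cball x0 \<rho> \<times> S \<Longrightarrow>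
        dist p' p < d \<Longrightarrow> dist (dk (fst p') (snd p')) (dk (fst p) (snd p)) < e'"
      unfolding uniformly_continuous_on_def using e' by metis
    show "\<exists>d>0. \<forall>x. norm (x - x0) < d \<longrightarrow>
      norm ((\<integral>y. k x y * g y \<partial>lborel) - (\<integral>y. k x0 y * g y \<partial>lborel) - (\<integral>y. (dk x0 y \<bullet> (x - x0)) * g y \<partial>lborel))
        \<le> e * norm (x - x0)"
    proof (intro exI[of _ "min d \<rho>"] conjI allI impI)
      show "min d \<rho> > 0" using d \<rho> by simp
      fix x assume x: "norm (x - x0) < min d \<rho>"
      have xU: "x \<in> U" using x \<rho> by (auto simp: dist_norm norm_minus_commute)
      have pw: "norm (k x y - k x0 y - dk x0 y \<bullet> (x - x0)) \<le> e' * norm (x - x0)" if y: "y \<in> S" for y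
      proof -
        let ?B = "ball x0 (min d \<rho>)"
        have "norm ((\<lambda>x. k x y - dk x0 y \<bullet> x) x - (\<lambda>x. k x y - dk x0 y \<bullet> x) x0) \<le> e' * norm (x - x0)"
        proof (rule differentiable_bound[where f'="\<lambda>x h. (dk x y - dk x0 y) \<bullet> h"])
          show "convex ?B" by simp
          show "x \<in> ?B" "x0 \<in> ?B" using x d \<rho> by (auto simp: dist_norm norm_minus_commute)
          fix z assume z: "z \<in> ?B"
          then have zU: "z \<in> U" using \<rho> by auto
          have "((\<lambda>x. k x y - dk x0 y \<bullet> x) has_derivative (\<lambda>h. dk z y \<bullet> h - dk x0 y \<bullet> h)) (at z)"
            by (intro has_derivative_diff der[OF zU y] bounded_linear_imp_has_derivative bounded_linear_inner_right)
          then show "((\<lambda>x. k x y - dk x0 y \<bullet> x) has_derivative (\<lambda>h. (dk z y - dk x0 y) \<bullet> h)) (at z within ?B)"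
            by (auto intro: has_derivative_at_withinI simp: inner_diff_left)
          have "dist (dk (fst (z,y)) (snd (z,y))) (dk (fst (x0,y)) (snd (x0,y))) < e'"
            by (rule dd) (use z y \<rho> d in \<open>auto simp: dist_Pair_Pair dist_commute\<close>)
          then have nz: "norm (dk z y - dk x0 y) \<le> e'" by (simp add: dist_norm)
          show "onorm (\<lambda>h. (dk z y - dk x0 y) \<bullet> h) \<le> e'"
          proof (rule onorm_le)
            fix h
            have "norm ((dk z y - dk x0 y) \<bullet> h) \<le> norm (dk z y - dk x0 y) * norm h"
              using norm_cauchy_schwarz by (simp add: Cauchy_Schwarz_ineq2)
            also have "\<dots> \<le> e' * norm h" using nz by (simp add: mult_right_mono)
            finally show "norm ((dk z y - dk x0 y) \<bullet> h) \<le> e' * norm h" .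
          qed
        qed
        then show ?thesis by (simp add: inner_diff_right algebra_simps)
      qed
      have "(\<integral>y. k x y * g y \<partial>lborel) - (\<integral>y. k x0 y * g y \<partial>lborel) - (\<integral>y. (dk x0 y \<bullet> (x - x0)) * g y \<partial>lborel)
          = (\<integral>y. (k x y - k x0 y - dk x0 y \<bullet> (x - x0)) * g y \<partial>lborel)"
        using intk[OF xU] intk[OF x0] intdk[of "x - x0"]
        by (simp add: left_diff_distrib Bochner_Integration.integral_diff)
      also have "norm \<dots> \<le> (\<integral>y. norm ((k x y - k x0 y - dk x0 y \<bullet> (x - x0)) * g y) \<partial>lborel)"
        by (rule integral_norm_bound)
      also have "\<dots> \<le> (\<integral>y. e' * norm (x - x0) * norm (g y) \<partial>lborel)"
      proof (rule integral_mono)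
        show "integrable lborel (\<lambda>y. norm ((k x y - k x0 y - dk x0 y \<bullet> (x - x0)) * g y))"
          using intk[OF xU] intk[OF x0] intdk[of "x - x0"]
          by (intro integrable_norm) (simp add: left_diff_distrib)
        show "integrable lborel (\<lambda>y. e' * norm (x - x0) * norm (g y))" using g by simp
        fix y
        show "norm ((k x y - k x0 y - dk x0 y \<bullet> (x - x0)) * g y) \<le> e' * norm (x - x0) * norm (g y)"
        proof (cases "y \<in> S")
          case True
          then show ?thesis using pw[OF True] by (simp add: abs_mult mult_right_mono)
        next
          case False then show ?thesis using g0 by simp
        qed
      qed
      also have "\<dots> = e' * norm (x - x0) * I" by (simp add: I_def)
      also have "\<dots> \<le> e * norm (x - x0)"
      proof -
        have "e' * I \<le> e" using e I0 by (simp add: e'_def field_simps)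
        then show ?thesis by (metis mult.commute mult.left_commute mult_right_mono norm_ge_zero)
      qed
      finally show "norm ((\<integral>y. k x y * g y \<partial>lborel) - (\<integral>y. k x0 y * g y \<partial>lborel) - (\<integral>y. (dk x0 y \<bullet> (x - x0)) * g y \<partial>lborel))
        \<le> e * norm (x - x0)" .
    qed
  qed
qed

lemma cui:
  fixes f :: "'a::euclidean_space \<Rightarrow> 'b::euclidean_space \<Rightarrow> real" and g :: "'b \<Rightarrow> real"
  assumes U: "open U" and S: "compact S" and g: "integrable lborel g" and g0: "\<And>y. y \<notin> S \<Longrightarrow> g y = 0"
    and cf: "continuous_on (U \<times> S) (\<lambda>p. f (fst p) (snd p))"
  shows "continuous_on U (\<lambda>x. \<integral>y. f x y * g y \<partial>lborel)"
  unfolding continuous_on_iff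
proof (intro ballI allI impI)
  fix x0 e assume x0: "x0 \<in> U" and e: "(e::real) > 0"
  obtain \<rho> where \<rho>: "\<rho> > 0" "cball x0 \<rho> \<subseteq> U" using open_contains_cball U x0 by blast
  have cfx: "continuous_on S (f x)" if "x \<in> U" for x
  proof -
    have "continuous_on S ((\<lambda>p. f (fst p) (snd p)) \<circ> (\<lambda>y. (x, y)))"
      apply (rule continuous_on_compose)
       apply (intro continuous_intros)
      apply (rule continuous_on_subset[OF cf]) using that by auto
    then show ?thesis by (simp add: o_def)
  qed
  have intf: "integrable lborel (\<lambda>y. f x y * g y)" if "x \<in> U" for x
    by (rule int_cm[OF S cfx[OF that] g g0])
  define I where "I = (\<integral>y. norm (g y) \<partial>lborel)"
  have I0: "I \<ge> 0" unfolding I_def by simp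
  define e' where "e' = e / (I + 1)"
  have e': "e' > 0" using e I0 by (simp add: e'_def)
  have "uniformly_continuous_on (cball x0 \<rho> \<times> S) (\<lambda>p. f (fst p) (snd p))"
    by (rule compact_uniformly_continuous[OF continuous_on_subset[OF cf]])
       (use \<rho> S in \<open>auto intro: compact_Times\<close>)
  then obtain d where d: "d > 0" and dd: "\<And>p p'. p \<in> cball x0 \<rho> \<times> S \<Longrightarrow> p' \<in> cball x0 \<rho> \<times> S \<Longrightarrow>
      dist p' p < d \<Longrightarrow> dist (f (fst p') (snd p')) (f (fst p) (snd p)) < e'"
    unfolding uniformly_continuous_on_def using e' by metis
  show "\<exists>d>0. \<forall>x'\<in>U. dist x' x0 < d \<longrightarrow> dist (\<integral>y. f x' y * g y \<partial>lborel) (\<integral>y. f x0 y * g y \<partial>lborel) < e"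
  proof (intro exI[of _ "min d \<rho>"] conjI ballI impI)
    show "min d \<rho> > 0" using d \<rho> by simp
    fix x assume xU: "x \<in> U" and x: "dist x x0 < min d \<rho>"
    have pw: "norm (f x y - f x0 y) \<le> e'" if y: "y \<in> S" for y
    proof -
      have "dist (f (fst (x,y)) (snd (x,y))) (f (fst (x0,y)) (snd (x0,y))) < e'"
        by (rule dd) (use x y \<rho> d in \<open>auto simp: dist_Pair_Pair dist_commute\<close>)
      then show ?thesis by (simp add: dist_norm)
    qed
    have "dist (\<integral>y. f x y * g y \<partial>lborel) (\<integral>y. f x0 y * g y \<partial>lborel) = norm (\<integral>y. (f x y - f x0 y) * g y \<partial>lborel)"
      using intf[OF xU] intf[OF x0] by (simp add: dist_norm left_diff_distrib Bochner_Integration.integral_diff)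
    also have "\<dots> \<le> (\<integral>y. norm ((f x y - f x0 y) * g y) \<partial>lborel)"
      by (rule integral_norm_bound)
    also have "\<dots> \<le> (\<integral>y. e' * norm (g y) \<partial>lborel)"
    proof (rule integral_mono)
      show "integrable lborel (\<lambda>y. norm ((f x y - f x0 y) * g y))"
        using intf[OF xU] intf[OF x0] by (intro integrable_norm) (simp add: left_diff_distrib)
      show "integrable lborel (\<lambda>y. e' * norm (g y))" using g by simp
      fix y
      show "norm ((f x y - f x0 y) * g y) \<le> e' * norm (g y)"
      proof (cases "y \<in> S")
        case True
        then show ?thesis using pw[OF True] by (simp add: abs_mult mult_right_mono)
      next
        case False then show ?thesis using g0 by simp
      qed
    qed
    also have "\<dots> = e' * I" by (simp add: I_def)
    also have "\<dots> < e" using e I0 by (simp add: e'_def field_simps)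
    finally show "dist (\<integral>y. f x y * g y \<partial>lborel) (\<integral>y. f x0 y * g y \<partial>lborel) < e" .
  qed
qed

lemma smooth_deriv:
  fixes f :: "'a::euclidean_space \<Rightarrow> real"
  assumes "smooth_on S f" "X \<in> S"
  shows "(f has_derivative (\<lambda>h. grad f X \<bullet> h)) (at X)"
proof -
  have "iderv f [] differentiable (at X)" using assms unfolding smooth_on_def
    by (metis empty_set empty_subsetI)
  then have d: "(f has_derivative frechet_derivative f (at X)) (at X)"
    by (simp add: frechet_derivative_works)
  then have lin: "linear (frechet_derivative f (at X))" by (rule has_derivative_linear)
  have eq: "frechet_derivative f (at X) h = grad f X \<bullet> h" for h
  proof -
    have "frechet_derivative f (at X) h = frechet_derivative f (at X) (\<Sum>b\<in>Basis. (h \<bullet> b) *\<^sub>R b)"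
      by (simp add: euclidean_representation)
    also have "\<dots> = (\<Sum>b\<in>Basis. (h \<bullet> b) * frechet_derivative f (at X) b)"
      using lin by (simp add: linear_sum linear_scale)
    also have "\<dots> = grad f X \<bullet> h"
      by (simp add: grad_def inner_sum_left inner_sum_right mult_ac inner_commute)
    finally show ?thesis .
  qed
  show ?thesis using d unfolding eq[abs_def] by simp
qed

lemma smooth_grad_cont:
  fixes f :: "'a::euclidean_space \<Rightarrow> real"
  assumes "smooth_on S f" "open S"
  shows "continuous_on S (grad f)"
proof -
  have c: "continuous_on S (\<lambda>X. frechet_derivative f (at X) b)" if b: "b \<in> Basis" for b
  proof -
    have "\<forall>X\<in>S. isCont (\<lambda>X. frechet_derivative f (at X) b) X"
    proof
      fix X assume "X \<in> S"
      then have "iderv f [b] differentiable (at X)" using assms b unfolding smooth_on_def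
        by (metis empty_set empty_subsetI insert_subset list.simps(15))
      then show "isCont (\<lambda>X. frechet_derivative f (at X) b) X"
        by (simp add: differentiable_imp_continuous_within)
    qed
    then show ?thesis using assms(2) by (simp add: continuous_on_eq_continuous_at)
  qed
  show ?thesis unfolding grad_def[abs_def]
    by (intro continuous_intros c)
qed

locale setting =
  fixes E :: "'a::euclidean_space set" and \<beta> \<zeta> :: "'a \<Rightarrow> real" and m1 m2 :: real
  assumes E: "closed E" and m1: "0 < m1" and m2: "0 < m2"
    and bpos: "\<forall>X\<in>UNIV - E. 0 < \<beta> X"
    and bsm: "smooth_on (UNIV - E) \<beta>"
    and bbd: "\<forall>X\<in>UNIV - E. m1 * infdist X E \<le> \<beta> X \<and> \<beta> X \<le> m2 * infdist X E"
    and bder: "\<forall>vs. set vs \<subseteq> Basis \<longrightarrow> (\<exists>C. \<forall>X\<in>UNIV - E.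
            \<bar>iderv \<beta> vs X\<bar> \<le> C * \<beta> X powr (1 - real (length vs)))"
    and zsm: "smooth_on UNIV \<zeta>"
    and zbd: "\<forall>X. 0 \<le> \<zeta> X \<and> \<zeta> X \<le> 1"
    and zsupp: "\<forall>X. \<zeta> X \<noteq> 0 \<longrightarrow> X \<in> ball 0 (1 / (2 * m2))"
begin

abbreviation "s \<equiv> 1 / (2 * m2)"
abbreviation "\<delta> X \<equiv> infdist X E"

lemma Enonempty: "E \<noteq> {}"
proof
  assume "E = {}"
  then have "0 < \<beta> 0" "\<beta> 0 \<le> m2 * infdist 0 E" using bpos bbd by auto
  then show False using \<open>E = {}\<close> by (simp add: infdist_def)
qed

lemma Om_open: "open (UNIV - E)" using E by (simp add: open_Diff)

lemma delta_pos: "X \<notin> E \<Longrightarrow> \<delta> X > 0"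
  using E Enonempty by (simp add: infdist_pos_not_in_closed)

lemma beta_pos: "X \<notin> E \<Longrightarrow> \<beta> X > 0" using bpos by auto

lemma beta_le: "X \<notin> E \<Longrightarrow> \<beta> X \<le> m2 * \<delta> X" using bbd by auto
lemma beta_ge: "X \<notin> E \<Longrightarrow> m1 * \<delta> X \<le> \<beta> X" using bbd by auto

lemma beta_grad: "X \<notin> E \<Longrightarrow> (\<beta> has_derivative (\<lambda>h. grad \<beta> X \<bullet> h)) (at X)"
  using smooth_deriv[OF bsm] by auto

lemma beta_cont: "continuous_on (UNIV - E) \<beta>"
  using beta_grad has_derivative_continuous Om_open
  by (metis DiffD2 continuous_at_imp_continuous_on)

lemma gbeta_cont: "continuous_on (UNIV - E) (grad \<beta>)"
  using smooth_grad_cont[OF bsm Om_open] .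

lemma zeta_grad: "(\<zeta> has_derivative (\<lambda>h. grad \<zeta> X \<bullet> h)) (at X)"
  using smooth_deriv[OF zsm] by auto

lemma zeta_cont: "continuous_on UNIV \<zeta>"
  using zeta_grad has_derivative_continuous
  by (metis continuous_at_imp_continuous_on)

lemma gzeta_cont: "continuous_on UNIV (grad \<zeta>)"
  using smooth_grad_cont[OF zsm] by simp

lemma zeta_supp: "\<zeta> Z \<noteq> 0 \<Longrightarrow> norm Z < s"
  using zsupp by auto

lemma gzeta_supp: assumes "norm Z > s" shows "grad \<zeta> Z = 0"
proof -
  have "((\<lambda>_. 0) has_derivative (\<lambda>h. 0)) (at Z)" by simp
  then have "(\<zeta> has_derivative (\<lambda>h. 0)) (at Z)"
    apply (rule has_derivative_transform_within_open[where s="{W. norm W > s}"])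
    using assms by (auto intro: open_Collect_less continuous_intros) (meson not_less_iff_gr_or_eq zeta_supp)
  from has_derivative_unique[OF zeta_grad this] have "\<And>h. grad \<zeta> Z \<bullet> h = 0" by metis
  from this[of "grad \<zeta> Z"] show ?thesis by simp
qed

lemma gbeta_bd: "\<exists>Cb\<ge>0. \<forall>X. X \<notin> E \<longrightarrow> norm (grad \<beta> X) \<le> Cb"
proof -
  have "\<forall>b\<in>Basis. \<exists>C. \<forall>X\<in>UNIV - E. \<bar>frechet_derivative \<beta> (at X) b\<bar> \<le> C"
  proof
    fix b :: 'a assume b: "b \<in> Basis"
    then obtain C where C: "\<forall>X\<in>UNIV - E. \<bar>iderv \<beta> [b] X\<bar> \<le> C * \<beta> X powr (1 - real (length [b]))"
      using bder by (metis empty_set empty_subsetI insert_subset list.simps(15))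
    show "\<exists>C. \<forall>X\<in>UNIV - E. \<bar>frechet_derivative \<beta> (at X) b\<bar> \<le> C"
    proof (intro exI[of _ C] ballI)
      fix X assume "X \<in> UNIV - E"
      then have "\<beta> X > 0" using bpos by auto
      have "\<bar>iderv \<beta> [b] X\<bar> \<le> C * \<beta> X powr (1 - real (length [b]))"
        using C \<open>X \<in> UNIV - E\<close> by blast
      with \<open>\<beta> X > 0\<close> show "\<bar>frechet_derivative \<beta> (at X) b\<bar> \<le> C" by simp
    qed
  qed
  then obtain C where C: "\<And>b X. b \<in> Basis \<Longrightarrow> X \<notin> E \<Longrightarrow> \<bar>frechet_derivative \<beta> (at X) b\<bar> \<le> C b"
    by (metis DiffI UNIV_I bchoice)
  show ?thesis
  proof (intro exI[of _ "\<Sum>b\<in>Basis. \<bar>C b\<bar>"] conjI allI impI)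
    show "0 \<le> (\<Sum>b\<in>Basis. \<bar>C b\<bar>)" by (simp add: sum_nonneg)
    fix X assume X: "X \<notin> E"
    have "norm (grad \<beta> X) \<le> (\<Sum>b\<in>Basis. norm (frechet_derivative \<beta> (at X) b *\<^sub>R b))"
      unfolding grad_def by (rule norm_sum)
    also have "\<dots> \<le> (\<Sum>b\<in>Basis. \<bar>C b\<bar>)"
      by (rule sum_mono) (use C[OF _ X] in \<open>force\<close>)
    finally show "norm (grad \<beta> X) \<le> (\<Sum>b\<in>Basis. \<bar>C b\<bar>)" .
  qed
qed

definition "Zf X Y = (1 / \<beta> X) *\<^sub>R (X - Y)"
definition "K X Y = \<beta> X powr (- real DIM('a)) * \<zeta> (Zf X Y)"
definition "dK X Y = \<beta> X powr (- real DIM('a) - 1) *\<^sub>R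
   (grad \<zeta> (Zf X Y) - (real DIM('a) * \<zeta> (Zf X Y) + grad \<zeta> (Zf X Y) \<bullet> Zf X Y) *\<^sub>R grad \<beta> X)"

lemma K_deriv:
  assumes X: "X \<notin> E"
  shows "((\<lambda>X. K X Y) has_derivative (\<lambda>h. dK X Y \<bullet> h)) (at X)"
proof -
  have bX: "\<beta> X > 0" using beta_pos X .
  have d1: "((\<lambda>X. \<beta> X powr (- real DIM('a))) has_derivative
      (\<lambda>h. \<beta> X powr (- real DIM('a)) * ((\<lambda>h. 0) h * ln (\<beta> X) + (grad \<beta> X \<bullet> h) * (- real DIM('a)) / \<beta> X))) (at X)"
    by (rule has_derivative_powr[OF beta_grad[OF X] has_derivative_const bX]) simp
  have d2: "((\<lambda>X. Zf X Y) has_derivative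
      (\<lambda>h. (1 / \<beta> X) *\<^sub>R h + (- (grad \<beta> X \<bullet> h) / (\<beta> X)\<^sup>2) *\<^sub>R (X - Y))) (at X)"
  proof -
    have a: "((\<lambda>X. 1 / \<beta> X) has_derivative (\<lambda>h. (0 * \<beta> X - 1 * (grad \<beta> X \<bullet> h)) / (\<beta> X * \<beta> X))) (at X)"
      by (rule has_derivative_divide'[OF has_derivative_const beta_grad[OF X]]) (use bX in simp)
    have b: "((\<lambda>X. X - Y) has_derivative (\<lambda>h. h - 0)) (at X)"
      by (intro has_derivative_diff has_derivative_ident has_derivative_const)
    show ?thesis unfolding Zf_def
      by (rule has_derivative_eq_rhs[OF has_derivative_scaleR[OF a b]])
         (auto simp: power2_eq_square)
  qed
  have d3: "((\<lambda>X. \<zeta> (Zf X Y)) has_derivative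
      (\<lambda>h. grad \<zeta> (Zf X Y) \<bullet> ((1 / \<beta> X) *\<^sub>R h + (- (grad \<beta> X \<bullet> h) / (\<beta> X)\<^sup>2) *\<^sub>R (X - Y)))) (at X)"
    using has_derivative_compose[OF d2 zeta_grad] by (simp add: o_def)
  have pw: "\<beta> X powr (- real DIM('a) - 1) = \<beta> X powr (- real DIM('a)) / \<beta> X"
    using bX by (simp add: powr_diff)
  show ?thesis unfolding K_def
  proof (rule has_derivative_eq_rhs[OF has_derivative_mult[OF d1 d3]], rule ext)
    fix h
    show "\<beta> X powr (- real DIM('a)) * (grad \<zeta> (Zf X Y) \<bullet> ((1 / \<beta> X) *\<^sub>R h + (- (grad \<beta> X \<bullet> h) / (\<beta> X)\<^sup>2) *\<^sub>R (X - Y))) +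
        \<beta> X powr (- real DIM('a)) * ((\<lambda>h. 0) h * ln (\<beta> X) + (grad \<beta> X \<bullet> h) * (- real DIM('a)) / \<beta> X) * \<zeta> (Zf X Y)
        = dK X Y \<bullet> h"
    proof -
      have XY: "X - Y = \<beta> X *\<^sub>R Zf X Y" using bX by (simp add: Zf_def)
      show ?thesis
        unfolding dK_def pw XY using bX
        by (simp add: inner_add_right inner_diff_left inner_diff_right inner_scaleR_left inner_scaleR_right
            power2_eq_square field_simps inner_commute)
    qed
  qed
qed

end

context setting begin

lemma Zf_small: assumes X: "X \<notin> E" and n: "norm (Zf X Y) \<le> s" shows "dist X Y \<le> \<delta> X / 2"
proof -
  have bX: "\<beta> X > 0" using beta_pos X .
  have "norm (X - Y) / \<beta> X \<le> s" using n bX by (simp add: Zf_def)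
  then have "norm (X - Y) \<le> s * \<beta> X" using bX by (simp add: divide_le_eq)
  also have "\<dots> \<le> s * (m2 * \<delta> X)" using beta_le[OF X] m2 by (intro mult_left_mono) auto
  also have "\<dots> = \<delta> X / 2" using m2 by simp
  finally show ?thesis by (simp add: dist_norm)
qed

lemma K_supp: "X \<notin> E \<Longrightarrow> K X Y \<noteq> 0 \<Longrightarrow> dist X Y \<le> \<delta> X / 2"
  by (rule Zf_small) (auto simp: K_def dest!: zeta_supp)

lemma big_Z: "norm Z > s \<Longrightarrow> \<zeta> Z = 0"
  using zeta_supp by fastforce

lemma dK_supp: assumes "X \<notin> E" "dK X Y \<noteq> 0" shows "dist X Y \<le> \<delta> X / 2"
proof (rule Zf_small[OF assms(1)])
  show "norm (Zf X Y) \<le> s"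
  proof (rule ccontr)
    assume "\<not> norm (Zf X Y) \<le> s"
    then have "norm (Zf X Y) > s" by simp
    then have "\<zeta> (Zf X Y) = 0" "grad \<zeta> (Zf X Y) = 0" using big_Z gzeta_supp by auto
    then have "dK X Y = 0" by (simp add: dK_def)
    with assms show False by simp
  qed
qed

lemma cont_b: "continuous_on ((UNIV - E) \<times> (UNIV::'a set)) (\<lambda>p. \<beta> (fst p))"
  by (rule continuous_on_compose2[OF beta_cont]) (auto intro: continuous_intros)
lemma cont_gb: "continuous_on ((UNIV - E) \<times> (UNIV::'a set)) (\<lambda>p. grad \<beta> (fst p))"
  by (rule continuous_on_compose2[OF gbeta_cont]) (auto intro: continuous_intros)
lemma cont_Z: "continuous_on ((UNIV - E) \<times> (UNIV::'a set)) (\<lambda>p. Zf (fst p) (snd p))"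
  unfolding Zf_def
  by (intro continuous_intros cont_b) (auto dest: beta_pos)
lemma cont_zZ: "continuous_on ((UNIV - E) \<times> (UNIV::'a set)) (\<lambda>p. \<zeta> (Zf (fst p) (snd p)))"
  by (rule continuous_on_compose2[OF zeta_cont cont_Z]) auto
lemma cont_gzZ: "continuous_on ((UNIV - E) \<times> (UNIV::'a set)) (\<lambda>p. grad \<zeta> (Zf (fst p) (snd p)))"
  by (rule continuous_on_compose2[OF gzeta_cont cont_Z]) auto
lemma cont_pow: "continuous_on ((UNIV - E) \<times> (UNIV::'a set)) (\<lambda>p. \<beta> (fst p) powr a)"
  by (intro continuous_intros cont_b) (auto dest: beta_pos)

lemma K_cont: "continuous_on ((UNIV - E) \<times> UNIV) (\<lambda>p. K (fst p) (snd p))"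
  unfolding K_def by (intro continuous_intros cont_pow cont_zZ)

lemma dK_cont: "continuous_on ((UNIV - E) \<times> UNIV) (\<lambda>p. dK (fst p) (snd p))"
  unfolding dK_def by (intro continuous_intros cont_pow cont_zZ cont_gzZ cont_gb cont_Z)

end

lemma cont_slice:
  assumes "continuous_on (A \<times> B) (\<lambda>p. f (fst p) (snd p))" "x \<in> A"
  shows "continuous_on B (f x)"
proof -
  have "continuous_on B ((\<lambda>p. f (fst p) (snd p)) \<circ> (\<lambda>y. (x, y)))"
    apply (rule continuous_on_compose)
     apply (intro continuous_intros)
    apply (rule continuous_on_subset[OF assms(1)]) using assms(2) by auto
  then show ?thesis by (simp add: o_def)
qed

lemma cont_slice2:
  assumes "continuous_on (A \<times> B) (\<lambda>p. f (fst p) (snd p))" "y \<in> B"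
  shows "continuous_on A (\<lambda>x. f x y)"
proof -
  have "continuous_on A ((\<lambda>p. f (fst p) (snd p)) \<circ> (\<lambda>x. (x, y)))"
    apply (rule continuous_on_compose)
     apply (intro continuous_intros)
    apply (rule continuous_on_subset[OF assms(1)]) using assms(2) by auto
  then show ?thesis by (simp add: o_def)
qed

context setting begin

lemma delta_lip: "\<delta> X \<le> \<delta> Y + dist X Y" by (rule infdist_triangle)

lemma loc_int_ind:
  assumes "loc_integrable (UNIV - E) G0" "compact S" "S \<subseteq> UNIV - E"
  shows "integrable lborel (\<lambda>Y. indicator S Y * G0 Y)"
  using assms unfolding loc_integrable_def set_integrable_def by simp

lemma reg_eq: "regularize \<beta> \<zeta> G0 X = (\<integral>Y. K X Y * G0 Y \<partial>lborel)"
  unfolding regularize_def K_def Zf_def by simp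

lemma G_deriv:
  assumes G0: "loc_integrable (UNIV - E) G0" and X0: "X0 \<notin> E"
  shows "(regularize \<beta> \<zeta> G0 has_derivative (\<lambda>h. \<integral>Y. (dK X0 Y \<bullet> h) * G0 Y \<partial>lborel)) (at X0)"
proof -
  define d0 where "d0 = \<delta> X0"
  have d0: "d0 > 0" using delta_pos[OF X0] by (simp add: d0_def)
  define U where "U = ball X0 (d0/4)"
  define S where "S = cball X0 (7/8 * d0)"
  have UE: "x \<notin> E" if "x \<in> U" for x
  proof -
    have "d0 \<le> \<delta> x + dist X0 x" using delta_lip by (simp add: d0_def)
    then have "\<delta> x > 0" using that d0 by (simp add: U_def)
    then show ?thesis by (auto simp: infdist_zero)
  qed
  have SE: "S \<subseteq> UNIV - E"
  proof
    fix y assume "y \<in> S"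
    have "d0 \<le> \<delta> y + dist X0 y" using delta_lip by (simp add: d0_def)
    then have "\<delta> y > 0" using \<open>y \<in> S\<close> d0 by (simp add: S_def)
    then show "y \<in> UNIV - E" by (auto simp: infdist_zero)
  qed
  have inS: "y \<in> S" if x: "x \<in> U" and xy: "dist x y \<le> \<delta> x / 2" for x y
  proof -
    have "\<delta> x \<le> d0 + dist x X0" using delta_lip by (simp add: d0_def)
    then have "\<delta> x \<le> 5/4 * d0" using x by (simp add: U_def dist_commute)
    then have "dist X0 y \<le> dist X0 x + dist x y" by (rule_tac dist_triangle)
    then show ?thesis using x xy \<open>\<delta> x \<le> 5/4 * d0\<close> by (simp add: S_def U_def)
  qed
  have S: "compact S" by (simp add: S_def)
  define g where "g Y = indicator S Y * G0 Y" for Y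
  have g: "integrable lborel g" unfolding g_def by (rule loc_int_ind[OF G0 S SE])
  have g0: "\<And>y. y \<notin> S \<Longrightarrow> g y = 0" by (simp add: g_def)
  have X0U: "X0 \<in> U" using d0 by (simp add: U_def)
  have D: "((\<lambda>x. \<integral>y. K x y * g y \<partial>lborel) has_derivative (\<lambda>h. \<integral>y. (dK X0 y \<bullet> h) * g y \<partial>lborel)) (at X0)"
  proof (rule dui[OF _ S g g0])
    show "open U" by (simp add: U_def)
    show "X0 \<in> U" by (rule X0U)
    fix x y assume "x \<in> U" "y \<in> S"
    then show "((\<lambda>x. K x y) has_derivative (\<lambda>h. dK x y \<bullet> h)) (at x)" using K_deriv UE by blast
  next
    show "continuous_on (U \<times> S) (\<lambda>p. dK (fst p) (snd p))"
      by (rule continuous_on_subset[OF dK_cont]) (use UE in auto)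
  next
    fix x assume "x \<in> U"
    then show "continuous_on S (K x)"
      by (intro continuous_on_subset[OF cont_slice[OF K_cont]]) (use UE in auto)
  qed
  have L: "(\<lambda>h. \<integral>y. (dK X0 y \<bullet> h) * g y \<partial>lborel) = (\<lambda>h. \<integral>Y. (dK X0 Y \<bullet> h) * G0 Y \<partial>lborel)"
  proof (rule ext, rule Bochner_Integration.integral_cong[OF refl])
    fix h y
    show "(dK X0 y \<bullet> h) * g y = (dK X0 y \<bullet> h) * G0 y"
      using dK_supp[OF X0, of y] inS[OF X0U, of y] by (cases "y \<in> S"; cases "dK X0 y = 0") (auto simp: g_def)
  qed
  show ?thesis
  proof (rule has_derivative_transform_within_open[OF D[unfolded L] _ X0U])
    show "open U" by (simp add: U_def)
    fix x assume x: "x \<in> U"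
    show "(\<integral>y. K x y * g y \<partial>lborel) = regularize \<beta> \<zeta> G0 x"
      unfolding reg_eq
    proof (rule Bochner_Integration.integral_cong[OF refl])
      fix y
      show "K x y * g y = K x y * G0 y"
        using K_supp[OF UE[OF x], of y] inS[OF x, of y] by (cases "y \<in> S"; cases "K x y = 0") (auto simp: g_def)
    qed
  qed
qed

end

context setting begin

definition "Wc b X Y c = - K X Y * (b \<bullet> c) + (grad \<beta> X \<bullet> b) * \<beta> X powr (- real DIM('a)) * \<zeta> (Zf X Y) * (Zf X Y \<bullet> c)"
definition "dW b X Y c = \<beta> X powr (- real DIM('a) - 1) *\<^sub>R
   ((b \<bullet> c) *\<^sub>R grad \<zeta> (Zf X Y) - (grad \<beta> X \<bullet> b) *\<^sub>R ((Zf X Y \<bullet> c) *\<^sub>R grad \<zeta> (Zf X Y) + \<zeta> (Zf X Y) *\<^sub>R c))"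

lemma W_deriv:
  assumes X: "X \<notin> E"
  shows "((\<lambda>Y. Wc b X Y c) has_derivative (\<lambda>h. dW b X Y c \<bullet> h)) (at Y)"
proof -
  have bX: "\<beta> X > 0" using beta_pos X .
  have pw: "\<beta> X powr (- real DIM('a) - 1) = \<beta> X powr (- real DIM('a)) / \<beta> X"
    using bX by (simp add: powr_diff)
  have dZ: "((\<lambda>Y. Zf X Y) has_derivative (\<lambda>h. (1 / \<beta> X) *\<^sub>R (0 - h))) (at Y)"
    unfolding Zf_def
    by (intro has_derivative_scaleR_right has_derivative_diff has_derivative_ident has_derivative_const)
  have dzZ: "((\<lambda>Y. \<zeta> (Zf X Y)) has_derivative (\<lambda>h. grad \<zeta> (Zf X Y) \<bullet> ((1 / \<beta> X) *\<^sub>R (0 - h)))) (at Y)"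
    using has_derivative_compose[OF dZ zeta_grad] by (simp add: o_def)
  have dZc: "((\<lambda>Y. Zf X Y \<bullet> c) has_derivative (\<lambda>h. ((1 / \<beta> X) *\<^sub>R (0 - h)) \<bullet> c)) (at Y)"
    by (rule has_derivative_inner_left[OF dZ])
  have D1: "((\<lambda>Y. - (\<beta> X powr (- real DIM('a)) * \<zeta> (Zf X Y)) * (b \<bullet> c)) has_derivative
      (\<lambda>h. - (\<beta> X powr (- real DIM('a)) * (grad \<zeta> (Zf X Y) \<bullet> ((1 / \<beta> X) *\<^sub>R (0 - h)))) * (b \<bullet> c))) (at Y)"
    by (intro has_derivative_mult_left has_derivative_minus has_derivative_mult_right dzZ)
  have D2: "((\<lambda>Y. (grad \<beta> X \<bullet> b) * \<beta> X powr (- real DIM('a)) * \<zeta> (Zf X Y)) has_derivative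
      (\<lambda>h. (grad \<beta> X \<bullet> b) * \<beta> X powr (- real DIM('a)) * (grad \<zeta> (Zf X Y) \<bullet> ((1 / \<beta> X) *\<^sub>R (0 - h))))) (at Y)"
    by (intro has_derivative_mult_right dzZ)
  show ?thesis unfolding Wc_def K_def
  proof (rule has_derivative_eq_rhs[OF has_derivative_add[OF D1 has_derivative_mult[OF D2 dZc]]], rule ext)
    fix h
    have i1: "grad \<zeta> (Zf X Y) \<bullet> ((1 / \<beta> X) *\<^sub>R (0 - h)) = - (grad \<zeta> (Zf X Y) \<bullet> h) / \<beta> X"
      by (simp add: inner_scaleR_right inner_diff_right)
    have i2: "((1 / \<beta> X) *\<^sub>R (0 - h)) \<bullet> c = - (c \<bullet> h) / \<beta> X"
      by (simp add: inner_scaleR_left inner_diff_left inner_commute)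
    have i3: "dW b X Y c \<bullet> h = \<beta> X powr (- real DIM('a)) / \<beta> X *
        ((b \<bullet> c) * (grad \<zeta> (Zf X Y) \<bullet> h) - (grad \<beta> X \<bullet> b) * ((Zf X Y \<bullet> c) * (grad \<zeta> (Zf X Y) \<bullet> h) + \<zeta> (Zf X Y) * (c \<bullet> h)))"
      unfolding dW_def pw by (simp add: inner_scaleR_left inner_diff_left inner_add_left)
    show "- (\<beta> X powr (- real DIM('a)) * (grad \<zeta> (Zf X Y) \<bullet> ((1 / \<beta> X) *\<^sub>R (0 - h)))) * (b \<bullet> c) +
        ((grad \<beta> X \<bullet> b) * \<beta> X powr (- real DIM('a)) * \<zeta> (Zf X Y) * (((1 / \<beta> X) *\<^sub>R (0 - h)) \<bullet> c) +
         (grad \<beta> X \<bullet> b) * \<beta> X powr (- real DIM('a)) * (grad \<zeta> (Zf X Y) \<bullet> ((1 / \<beta> X) *\<^sub>R (0 - h))) * (Zf X Y \<bullet> c))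
      = dW b X Y c \<bullet> h"
      unfolding i1 i2 i3 using bX by (simp add: field_simps)
  qed
qed

lemma sum_lemma:
  fixes A B C :: "'b \<Rightarrow> real"
  shows "(\<Sum>c\<in>I. P * (A c - g * (B c + z * C c))) = P * ((\<Sum>c\<in>I. A c) - g * ((\<Sum>c\<in>I. B c) + z * (\<Sum>c\<in>I. C c)))"
  by (simp add: sum_subtractf sum.distrib sum_distrib_left right_diff_distrib distrib_left mult.assoc)

lemma div_identity:
  assumes X: "X \<notin> E" and b: "b \<in> Basis"
  shows "(\<Sum>c\<in>Basis. dW b X Y c \<bullet> c) = dK X Y \<bullet> b"
proof -
  have s1: "(\<Sum>c\<in>Basis. (b \<bullet> c) * (grad \<zeta> (Zf X Y) \<bullet> c)) = grad \<zeta> (Zf X Y) \<bullet> b"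
    using euclidean_inner[of b "grad \<zeta> (Zf X Y)"] by (simp add: inner_commute)
  have s2: "(\<Sum>c\<in>Basis. (Zf X Y \<bullet> c) * (grad \<zeta> (Zf X Y) \<bullet> c)) = grad \<zeta> (Zf X Y) \<bullet> Zf X Y"
    using euclidean_inner[of "Zf X Y" "grad \<zeta> (Zf X Y)"] by (simp add: inner_commute)
  have s3: "(\<Sum>c\<in>(Basis::'a set). c \<bullet> c) = real DIM('a)" by simp
  have e: "dW b X Y c \<bullet> c = \<beta> X powr (- real DIM('a) - 1) *
      ((b \<bullet> c) * (grad \<zeta> (Zf X Y) \<bullet> c) - (grad \<beta> X \<bullet> b) * ((Zf X Y \<bullet> c) * (grad \<zeta> (Zf X Y) \<bullet> c) + \<zeta> (Zf X Y) * (c \<bullet> c)))" for c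
    unfolding dW_def by (simp add: inner_scaleR_left inner_diff_left inner_add_left)
  have "(\<Sum>c\<in>Basis. dW b X Y c \<bullet> c) = \<beta> X powr (- real DIM('a) - 1) *
      ((\<Sum>c\<in>Basis. (b \<bullet> c) * (grad \<zeta> (Zf X Y) \<bullet> c)) - (grad \<beta> X \<bullet> b) *
        ((\<Sum>c\<in>Basis. (Zf X Y \<bullet> c) * (grad \<zeta> (Zf X Y) \<bullet> c)) + \<zeta> (Zf X Y) * (\<Sum>c\<in>(Basis::'a set). c \<bullet> c)))"
    unfolding e by (rule sum_lemma)
  also have "\<dots> = dK X Y \<bullet> b"
    unfolding s1 s2 s3 dK_def by (simp add: inner_diff_left inner_scaleR_left inner_add_left algebra_simps)
  finally show ?thesis .
qed

lemma W_supp: assumes "X \<notin> E" "Wc b X Y c \<noteq> 0" shows "dist X Y \<le> \<delta> X / 2"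
  using assms by (intro Zf_small) (auto simp: Wc_def K_def dest!: zeta_supp)

lemma dW_supp: assumes "X \<notin> E" "dW b X Y c \<noteq> 0" shows "dist X Y \<le> \<delta> X / 2"
proof (rule Zf_small[OF assms(1)])
  show "norm (Zf X Y) \<le> s"
  proof (rule ccontr)
    assume "\<not> norm (Zf X Y) \<le> s"
    then have "norm (Zf X Y) > s" by simp
    then have "\<zeta> (Zf X Y) = 0" "grad \<zeta> (Zf X Y) = 0" using big_Z gzeta_supp by auto
    then have "dW b X Y c = 0" by (simp add: dW_def)
    with assms show False by simp
  qed
qed

lemma W_cont: "continuous_on ((UNIV - E) \<times> UNIV) (\<lambda>p. Wc b (fst p) (snd p) c)"
  unfolding Wc_def K_def by (intro continuous_intros cont_pow cont_zZ cont_gb cont_Z)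

lemma dW_cont: "continuous_on ((UNIV - E) \<times> UNIV) (\<lambda>p. dW b (fst p) (snd p) c)"
  unfolding dW_def by (intro continuous_intros cont_pow cont_zZ cont_gzZ cont_gb cont_Z)

lemma W_bound:
  assumes X: "X \<notin> E" and b: "b \<in> Basis" and c: "c \<in> Basis" and Cb: "\<forall>X. X \<notin> E \<longrightarrow> norm (grad \<beta> X) \<le> Cb" and Cb0: "Cb \<ge> 0"
  shows "\<bar>Wc b X Y c\<bar> \<le> (1 + Cb * s) * \<beta> X powr (- real DIM('a))"
proof (cases "\<zeta> (Zf X Y) = 0")
  case True
  then show ?thesis using Cb0 m2 by (simp add: Wc_def K_def)
next
  case False
  have nZ: "norm (Zf X Y) < s" using zeta_supp[OF False] .
  have P: "\<beta> X powr (- real DIM('a)) \<ge> 0" by simp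
  have z: "0 \<le> \<zeta> (Zf X Y)" "\<zeta> (Zf X Y) \<le> 1" using zbd by auto
  have bc: "\<bar>b \<bullet> c\<bar> \<le> 1" using b c by (auto simp: inner_Basis)
  have gb: "\<bar>grad \<beta> X \<bullet> b\<bar> \<le> Cb" using Cb X b
    by (meson Basis_le_norm order_trans)
  have zc: "\<bar>Zf X Y \<bullet> c\<bar> \<le> s" using nZ c by (meson Basis_le_norm less_imp_le order_trans)
  have "\<bar>Wc b X Y c\<bar> \<le> \<bar>K X Y * (b \<bullet> c)\<bar> + \<bar>(grad \<beta> X \<bullet> b) * \<beta> X powr (- real DIM('a)) * \<zeta> (Zf X Y) * (Zf X Y \<bullet> c)\<bar>"
    unfolding Wc_def by linarith
  also have "\<bar>K X Y * (b \<bullet> c)\<bar> \<le> \<beta> X powr (- real DIM('a))"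
  proof -
    have "\<zeta> (Zf X Y) * \<bar>b \<bullet> c\<bar> \<le> 1" using z bc by (simp add: mult_le_one)
    then have "\<beta> X powr (- real DIM('a)) * (\<zeta> (Zf X Y) * \<bar>b \<bullet> c\<bar>) \<le> \<beta> X powr (- real DIM('a))"
      using P by (rule mult_left_le)
    then show ?thesis unfolding K_def using z P by (simp add: abs_mult mult.assoc)
  qed
  also have "\<bar>(grad \<beta> X \<bullet> b) * \<beta> X powr (- real DIM('a)) * \<zeta> (Zf X Y) * (Zf X Y \<bullet> c)\<bar>
      = \<bar>grad \<beta> X \<bullet> b\<bar> * \<bar>Zf X Y \<bullet> c\<bar> * (\<beta> X powr (- real DIM('a)) * \<zeta> (Zf X Y))"
    using z P by (simp add: abs_mult)
  also have "\<dots> \<le> (Cb * s) * (\<beta> X powr (- real DIM('a)) * 1)"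
    by (intro mult_mono gb zc mult_left_mono z) (use P z gb Cb0 m2 in auto)
  finally show ?thesis by (simp add: algebra_simps)
qed

end

lemma int_ind_cont:
  fixes f :: "'b::euclidean_space \<Rightarrow> real"
  assumes "compact A" "continuous_on A f"
  shows "integrable lborel (\<lambda>x. indicator A x * f x)"
proof -
  have "integrable lborel (\<lambda>x. f x * indicator A x)"
    by (rule int_cm[OF assms]) (auto intro!: integrable_real_indicator emeasure_compact_finite
        simp: assms compact_imp_closed borel_closed)
  then show ?thesis by (simp add: mult.commute)
qed

context setting begin

lemma W_int_bound:
  assumes Cb: "\<forall>X. X \<notin> E \<longrightarrow> norm (grad \<beta> X) \<le> Cb" and Cb0: "Cb \<ge> 0"
    and A: "compact A" "A \<subseteq> UNIV - E" and b: "b \<in> Basis" and c: "c \<in> Basis"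
  shows "(\<integral>X. indicator A X * \<bar>Wc b X Y c\<bar> \<partial>lborel)
     \<le> (1 + Cb * s) * (3 / m1) ^ DIM('a) * measure lborel (ball (0::'a) 1)"
    (is "_ \<le> ?Bw")
proof -
  have Bw0: "?Bw \<ge> 0" using Cb0 m1 m2 by simp
  have cW: "continuous_on A (\<lambda>X. \<bar>Wc b X Y c\<bar>)"
    by (intro continuous_intros continuous_on_subset[OF cont_slice2[OF W_cont]]) (use A in auto)
  have intW: "integrable lborel (\<lambda>X. indicator A X * \<bar>Wc b X Y c\<bar>)"
    by (rule int_ind_cont[OF A(1) cW])
  show ?thesis
  proof (cases "\<delta> Y = 0")
    case True
    have "indicator A X * \<bar>Wc b X Y c\<bar> = 0" for X
    proof (cases "X \<in> A \<and> Wc b X Y c \<noteq> 0")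
      case True2: True
      then have XE: "X \<notin> E" using A by auto
      have "dist X Y \<le> \<delta> X / 2" using W_supp[OF XE] True2 by blast
      moreover have "\<delta> X \<le> \<delta> Y + dist X Y" by (rule delta_lip)
      ultimately have "\<delta> X \<le> 0" using True by simp
      with delta_pos[OF XE] show ?thesis by simp
    qed auto
    then have z: "(\<lambda>X. indicator A X * \<bar>Wc b X Y c\<bar>) = (\<lambda>X. 0)" by (intro ext)
    show ?thesis using Bw0 unfolding z by simp
  next
    case False
    define d where "d = \<delta> Y"
    have d: "d > 0" using False infdist_nonneg[of Y E] by (simp add: d_def)
    define Q where "Q = (1 + Cb * s) * ((2/3) * m1 * d) powr (- real DIM('a))"
    have pw: "indicator A X * \<bar>Wc b X Y c\<bar> \<le> Q * indicator (ball Y (2 * d)) X" for X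
    proof (cases "X \<in> A \<and> Wc b X Y c \<noteq> 0")
      case True
      then have XE: "X \<notin> E" using A by auto
      have dXY: "dist X Y \<le> \<delta> X / 2" using W_supp[OF XE] True by blast
      have l1: "\<delta> X \<le> \<delta> Y + dist X Y" by (rule delta_lip)
      have l2: "\<delta> Y \<le> \<delta> X + dist Y X" by (rule delta_lip)
      have dX1: "\<delta> X \<le> 2 * d" using l1 dXY by (simp add: d_def)
      have dX2: "(2/3) * d \<le> \<delta> X" using l2 dXY by (simp add: d_def dist_commute)
      have inb: "X \<in> ball Y (2 * d)" using dXY dX1 d by (simp add: dist_commute)
      have "(2/3) * m1 * d \<le> \<beta> X"
      proof -
        have "(2/3) * m1 * d = m1 * ((2/3) * d)" by simp
        also have "\<dots> \<le> m1 * \<delta> X" using dX2 m1 by (intro mult_left_mono) auto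
        also have "\<dots> \<le> \<beta> X" by (rule beta_ge[OF XE])
        finally show ?thesis .
      qed
      then have "\<beta> X powr (- real DIM('a)) \<le> ((2/3) * m1 * d) powr (- real DIM('a))"
        by (intro powr_mono2') (use m1 d in auto)
      then have "\<bar>Wc b X Y c\<bar> \<le> Q"
      proof -
        have "0 \<le> 1 + Cb * s" using Cb0 m2 by simp
        then show ?thesis using W_bound[OF XE b c Cb Cb0] \<open>\<beta> X powr (- real DIM('a)) \<le> ((2/3) * m1 * d) powr (- real DIM('a))\<close>
          unfolding Q_def by (meson mult_left_mono order_trans)
      qed
      then show ?thesis using True inb by simp
    next
      case False
      have "Q \<ge> 0" unfolding Q_def using Cb0 m2 by simp
      then show ?thesis using False by auto
    qed
    have "(\<integral>X. indicator A X * \<bar>Wc b X Y c\<bar> \<partial>lborel) \<le> (\<integral>X. Q * indicator (ball Y (2 * d)) X \<partial>lborel)"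
      by (rule integral_mono[OF intW _ pw])
         (auto intro!: integrable_real_indicator emeasure_lborel_ball_finite)
    also have "\<dots> = Q * measure lborel (ball Y (2 * d))"
      by (subst integral_mult_right_zero) simp
    also have "\<dots> = Q * ((2 * d) ^ DIM('a) * measure lborel (ball (0::'a) 1))"
      using content_ball_conv_unit_ball[of "2*d" Y] d by simp
    also have "\<dots> = ?Bw"
    proof -
      have "((2/3) * m1 * d) powr (- real DIM('a)) * (2 * d) ^ DIM('a)
          = (2 * d) powr real DIM('a) / ((2/3) * m1 * d) powr real DIM('a)"
        by (subst powr_minus_divide, subst powr_realpow[symmetric]) (use d in auto)
      also have "\<dots> = ((2 * d) / ((2/3) * m1 * d)) powr real DIM('a)"
        by (rule powr_divide[symmetric])
      also have "(2 * d) / ((2/3) * m1 * d) = 3 / m1" using d m1 by (simp add: field_simps)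
      finally have "((2/3) * m1 * d) powr (- real DIM('a)) * (2 * d) ^ DIM('a) = (3 / m1) ^ DIM('a)"
        using m1 powr_realpow[of "3/m1" "DIM('a)"] by simp
      then show ?thesis unfolding Q_def by (metis mult.assoc)
    qed
    finally show ?thesis .
  qed
qed

end

context setting begin

lemma nbhd:
  assumes X0: "X0 \<notin> E"
  shows "\<exists>U S. open U \<and> X0 \<in> U \<and> U \<subseteq> UNIV - E \<and> compact S \<and> S \<subseteq> UNIV - E \<and>
     (\<forall>x\<in>U. \<forall>y. dist x y \<le> \<delta> x / 2 \<longrightarrow> y \<in> S)"
proof -
  define d0 where "d0 = \<delta> X0"
  have d0: "d0 > 0" using delta_pos[OF X0] by (simp add: d0_def)
  define U where "U = ball X0 (d0/4)"
  define S where "S = cball X0 (7/8 * d0)"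
  have UE: "U \<subseteq> UNIV - E"
  proof
    fix x assume "x \<in> U"
    have "d0 \<le> \<delta> x + dist X0 x" using delta_lip by (simp add: d0_def)
    then have "\<delta> x > 0" using \<open>x \<in> U\<close> d0 by (simp add: U_def)
    then show "x \<in> UNIV - E" by (auto simp: infdist_zero)
  qed
  have SE: "S \<subseteq> UNIV - E"
  proof
    fix y assume "y \<in> S"
    have "d0 \<le> \<delta> y + dist X0 y" using delta_lip by (simp add: d0_def)
    then have "\<delta> y > 0" using \<open>y \<in> S\<close> d0 by (simp add: S_def)
    then show "y \<in> UNIV - E" by (auto simp: infdist_zero)
  qed
  have inS: "y \<in> S" if x: "x \<in> U" and xy: "dist x y \<le> \<delta> x / 2" for x y
  proof -
    have "\<delta> x \<le> d0 + dist x X0" using delta_lip by (simp add: d0_def)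
    then have "\<delta> x \<le> 5/4 * d0" using x by (simp add: U_def dist_commute)
    then have "dist X0 y \<le> dist X0 x + dist x y" by (rule_tac dist_triangle)
    then show ?thesis using x xy \<open>\<delta> x \<le> 5/4 * d0\<close> by (simp add: S_def U_def)
  qed
  show ?thesis
  proof -
    have "open U" "X0 \<in> U" "compact S" using d0 by (auto simp: U_def S_def)
    then show ?thesis using UE SE inS by blast
  qed
qed

lemma pd_cont:
  assumes G0: "loc_integrable (UNIV - E) G0"
  shows "continuous_on (UNIV - E) (\<lambda>X. \<integral>Y. (dK X Y \<bullet> b) * G0 Y \<partial>lborel)"
  unfolding continuous_on_eq_continuous_at[OF Om_open]
proof
  fix X0 assume "X0 \<in> UNIV - E"
  then have "X0 \<notin> E" by simp
  from nbhd[OF this] obtain U S where U: "open U" "X0 \<in> U" "U \<subseteq> UNIV - E" and S: "compact S" "S \<subseteq> UNIV - E"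
    and inS: "\<And>x y. x \<in> U \<Longrightarrow> dist x y \<le> \<delta> x / 2 \<Longrightarrow> y \<in> S"
    by metis
  define g where "g Y = indicator S Y * G0 Y" for Y
  have g: "integrable lborel g" unfolding g_def by (rule loc_int_ind[OF G0 S])
  have c: "continuous_on U (\<lambda>x. \<integral>y. (dK x y \<bullet> b) * g y \<partial>lborel)"
  proof (rule cui[OF U(1) S(1) g])
    show "\<And>y. y \<notin> S \<Longrightarrow> g y = 0" by (simp add: g_def)
    have "continuous_on (U \<times> S) (\<lambda>p. dK (fst p) (snd p))"
      by (rule continuous_on_subset[OF dK_cont]) (use U(3) in blast)
    then show "continuous_on (U \<times> S) (\<lambda>p. dK (fst p) (snd p) \<bullet> b)"
      by (intro continuous_intros)
  qed
  have "continuous_on U (\<lambda>X. \<integral>Y. (dK X Y \<bullet> b) * G0 Y \<partial>lborel)"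
  proof (rule continuous_on_eq[OF c])
    fix x assume x: "x \<in> U"
    show "(\<integral>y. (dK x y \<bullet> b) * g y \<partial>lborel) = (\<integral>Y. (dK x Y \<bullet> b) * G0 Y \<partial>lborel)"
    proof (rule Bochner_Integration.integral_cong[OF refl])
      fix y
      have xE: "x \<notin> E" using x U by auto
      show "(dK x y \<bullet> b) * g y = (dK x y \<bullet> b) * G0 y"
        using dK_supp[OF xE, of y] inS[OF x, of y] by (cases "y \<in> S"; cases "dK x y = 0") (auto simp: g_def)
    qed
  qed
  then show "isCont (\<lambda>X. \<integral>Y. (dK X Y \<bullet> b) * G0 Y \<partial>lborel) X0"
    using U(1,2) continuous_on_eq_continuous_at by blast
qed

definition "SA A = {Y. \<exists>X\<in>A. dist X Y \<le> \<delta> X / 2}"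

lemma SA_sub: assumes "A \<subseteq> UNIV - E" shows "SA A \<subseteq> UNIV - E"
proof
  fix Y assume "Y \<in> SA A"
  then obtain X where X: "X \<in> A" "dist X Y \<le> \<delta> X / 2" by (auto simp: SA_def)
  then have XE: "X \<notin> E" using assms by auto
  have "\<delta> X \<le> \<delta> Y + dist X Y" by (rule delta_lip)
  then have "\<delta> Y > 0" using X delta_pos[OF XE] by simp
  then show "Y \<in> UNIV - E" by (auto simp: infdist_zero)
qed

lemma SA_ball: assumes "A \<subseteq> ball z r" "z \<in> E" shows "SA A \<subseteq> ball z (2 * r)"
proof
  fix Y assume "Y \<in> SA A"
  then obtain X where X: "X \<in> A" "dist X Y \<le> \<delta> X / 2" by (auto simp: SA_def)
  have "\<delta> X \<le> dist X z" using assms(2) by (rule infdist_le)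
  moreover have "dist z X < r" using X assms by auto
  moreover have "dist z Y \<le> dist z X + dist X Y" by (rule dist_triangle)
  moreover have "dist X z = dist z X" by (rule dist_commute)
  moreover have "dist z X \<ge> 0" by simp
  ultimately have "dist z Y < 2 * r" using X by linarith
  then show "Y \<in> ball z (2 * r)" by simp
qed

lemma SA_compact: assumes A: "compact A" "A \<subseteq> UNIV - E" shows "compact (SA A)"
proof -
  define T where "T = (A \<times> (UNIV::'a set)) \<inter> {p. norm (snd p) \<le> \<delta> (fst p) / 2}"
  have cT: "closed T" unfolding T_def
    by (intro closed_Int closed_Times compact_imp_closed A closed_UNIV closed_Collect_le continuous_intros
        continuous_on_compose2[OF continuous_on_infdist[OF continuous_on_id]]) auto
  obtain e0 where e0: "e0 \<in> E" using Enonempty by blast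
  obtain R where R: "\<And>X. X \<in> A \<Longrightarrow> norm X \<le> R" using compact_imp_bounded[OF A(1)] bounded_iff by metis
  have "T \<subseteq> cball 0 R \<times> cball 0 ((R + norm e0) / 2)"
  proof
    fix p assume p: "p \<in> T"
    then have "fst p \<in> A" by (auto simp: T_def)
    have "\<delta> (fst p) \<le> dist (fst p) e0" using e0 by (rule infdist_le)
    also have "\<dots> \<le> norm (fst p) + norm e0" by (simp add: dist_norm norm_triangle_ineq4)
    also have "\<dots> \<le> R + norm e0" using R[OF \<open>fst p \<in> A\<close>] by simp
    finally show "p \<in> cball 0 R \<times> cball 0 ((R + norm e0) / 2)"
      using p R[OF \<open>fst p \<in> A\<close>] by (cases p) (auto simp: T_def)
  qed
  then have "bounded T" by (rule bounded_subset[rotated]) (intro bounded_Times bounded_cball)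
  with cT have "compact T" using compact_eq_bounded_closed[of T] by blast
  then have "compact ((\<lambda>p. fst p + snd p) ` T)"
    by (rule compact_continuous_image[rotated]) (intro continuous_intros)
  also have "(\<lambda>p. fst p + snd p) ` T = SA A"
  proof (rule set_eqI)
    fix Y
    show "Y \<in> (\<lambda>p. fst p + snd p) ` T \<longleftrightarrow> Y \<in> SA A"
    proof
      assume "Y \<in> (\<lambda>p. fst p + snd p) ` T"
      then obtain X V where "X \<in> A" "norm V \<le> \<delta> X / 2" "Y = X + V" by (auto simp: T_def)
      then have "dist X Y \<le> \<delta> X / 2" by (simp add: dist_norm)
      then show "Y \<in> SA A" using \<open>X \<in> A\<close> by (auto simp: SA_def)
    next
      assume "Y \<in> SA A"
      then obtain X where X: "X \<in> A" "dist X Y \<le> \<delta> X / 2" by (auto simp: SA_def)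
      then have "(X, Y - X) \<in> T" by (simp add: T_def dist_norm norm_minus_commute)
      then show "Y \<in> (\<lambda>p. fst p + snd p) ` T" by (rule rev_image_eqI) simp
    qed
  qed
  finally show ?thesis .
qed

end

context setting begin

definition sig :: "'a set \<Rightarrow> real \<Rightarrow> ('a \<Rightarrow> real) \<Rightarrow> 'a \<Rightarrow> real"
  where "sig A M pdf X = sgn (indicator A X * pdf X) / M"
definition "Phc b A M pdf Y c = (\<integral>X. Wc b X Y c * sig A M pdf X \<partial>lborel)"
definition "Phi b A M pdf Y = (\<Sum>c\<in>Basis. Phc b A M pdf Y c *\<^sub>R c)"

lemma sig_meas:
  assumes "compact A" "continuous_on A pdf"
  shows "sig A M pdf \<in> borel_measurable lborel"
proof -
  have "(\<lambda>X. indicator A X *\<^sub>R pdf X) \<in> borel_measurable borel"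
    using assms by (intro borel_measurable_continuous_on_indicator) (auto simp: compact_imp_closed borel_closed)
  then have m: "(\<lambda>X. indicator A X * pdf X) \<in> borel_measurable lborel" by simp
  show ?thesis unfolding sig_def[abs_def] using m by measurable
qed

lemma sig0: "X \<notin> A \<Longrightarrow> sig A M pdf X = 0" by (simp add: sig_def)

lemma sig_bd: "M > 0 \<Longrightarrow> \<bar>sig A M pdf X\<bar> \<le> indicator A X / M"
  by (cases "X \<in> A") (auto simp: sig_def abs_sgn_eq divide_right_mono)

lemma sig_int:
  assumes "compact A" "continuous_on A pdf" "M > 0"
  shows "integrable lborel (sig A M pdf)"
proof (rule Bochner_Integration.integrable_bound[where f="\<lambda>X. indicator A X / M"])
  show "integrable lborel (\<lambda>X. indicator A X / M)"
    using assms by (intro integrable_divide integrable_real_indicator emeasure_compact_finite)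
       (auto simp: compact_imp_closed borel_closed)
  show "sig A M pdf \<in> borel_measurable lborel" by (rule sig_meas[OF assms(1,2)])
  show "AE x in lborel. norm (sig A M pdf x) \<le> norm (indicator A x / M)"
    using sig_bd[OF assms(3)] assms(3) by (auto simp: abs_mult)
qed

lemma sig_pd: "M > 0 \<Longrightarrow> sig A M pdf X * pdf X = indicator A X * \<bar>pdf X\<bar> / M"
  by (cases "X \<in> A") (auto simp: sig_def sgn_mult_abs abs_sgn_eq sgn_if)

lemma Phc_deriv:
  assumes A: "compact A" "A \<subseteq> UNIV - E" and pdf: "continuous_on A pdf" and M: "M > 0"
  shows "((\<lambda>Y. Phc b A M pdf Y c) has_derivative (\<lambda>h. \<integral>X. (dW b X Y c \<bullet> h) * sig A M pdf X \<partial>lborel)) (at Y)"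
  unfolding Phc_def
proof (rule dui[where U=UNIV and S=A and k="\<lambda>Y X. Wc b X Y c" and dk="\<lambda>Y X. dW b X Y c"])
  show "integrable lborel (sig A M pdf)" by (rule sig_int[OF A(1) pdf M])
  show "\<And>y. y \<notin> A \<Longrightarrow> sig A M pdf y = 0" by (rule sig0)
  fix x y assume "y \<in> A"
  then show "((\<lambda>x. Wc b y x c) has_derivative (\<lambda>h. dW b y x c \<bullet> h)) (at x)"
    using W_deriv A by blast
next
  have "continuous_on (UNIV \<times> A) ((\<lambda>p. dW b (fst p) (snd p) c) \<circ> (\<lambda>p. (snd p, fst p)))"
    apply (rule continuous_on_compose)
     apply (intro continuous_intros)
    apply (rule continuous_on_subset[OF dW_cont]) using A by auto
  then show "continuous_on (UNIV \<times> A) (\<lambda>p. dW b (snd p) (fst p) c)" by (simp add: o_def)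
next
  fix x
  show "continuous_on A (\<lambda>X. Wc b X x c)"
    by (rule continuous_on_subset[OF cont_slice2[OF W_cont]]) (use A in auto)
qed (use A in auto)

definition "DPhi b A M pdf Y h = (\<Sum>c\<in>Basis. (\<integral>X. (dW b X Y c \<bullet> h) * sig A M pdf X \<partial>lborel) *\<^sub>R c)"

lemma Phi_deriv:
  assumes A: "compact A" "A \<subseteq> UNIV - E" and pdf: "continuous_on A pdf" and M: "M > 0"
  shows "(Phi b A M pdf has_derivative DPhi b A M pdf Y) (at Y)"
proof -
  have "((\<lambda>Y. \<Sum>c\<in>Basis. Phc b A M pdf Y c *\<^sub>R c) has_derivative
      (\<lambda>h. \<Sum>c\<in>Basis. (\<integral>X. (dW b X Y c \<bullet> h) * sig A M pdf X \<partial>lborel) *\<^sub>R c)) (at Y)"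
    by (intro has_derivative_sum has_derivative_scaleR_left Phc_deriv[OF A pdf M])
  then show ?thesis unfolding Phi_def[abs_def] DPhi_def[abs_def] by simp
qed

lemma Phi_fd:
  assumes A: "compact A" "A \<subseteq> UNIV - E" and pdf: "continuous_on A pdf" and M: "M > 0"
  shows "frechet_derivative (Phi b A M pdf) (at Y) = DPhi b A M pdf Y"
  using frechet_derivative_at[OF Phi_deriv[OF assms]] by simp

lemma Phi_div:
  assumes A: "compact A" "A \<subseteq> UNIV - E" and pdf: "continuous_on A pdf" and M: "M > 0" and b: "b \<in> Basis"
  shows "divergence (Phi b A M pdf) Y = (\<integral>X. (dK X Y \<bullet> b) * sig A M pdf X \<partial>lborel)"
proof -
  have int: "integrable lborel (\<lambda>X. (dW b X Y e \<bullet> e) * sig A M pdf X)" for e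
    by (rule int_cm[OF A(1) _ sig_int[OF A(1) pdf M] sig0])
       (intro continuous_intros continuous_on_subset[OF cont_slice2[OF dW_cont]], use A in auto)
  have "divergence (Phi b A M pdf) Y = (\<Sum>e\<in>Basis. DPhi b A M pdf Y e \<bullet> e)"
    unfolding divergence_def Phi_fd[OF A pdf M] ..
  also have "\<dots> = (\<Sum>e\<in>Basis. (\<integral>X. (dW b X Y e \<bullet> e) * sig A M pdf X \<partial>lborel))"
  proof (rule sum.cong[OF refl])
    fix e :: 'a assume e: "e \<in> Basis"
    show "DPhi b A M pdf Y e \<bullet> e = (\<integral>X. (dW b X Y e \<bullet> e) * sig A M pdf X \<partial>lborel)"
      unfolding DPhi_def using e by (simp add: inner_sum_left inner_Basis if_distrib cong: if_cong)
  qed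
  also have "\<dots> = (\<integral>X. (\<Sum>e\<in>Basis. (dW b X Y e \<bullet> e) * sig A M pdf X) \<partial>lborel)"
    using int by (simp add: Bochner_Integration.integral_sum)
  also have "\<dots> = (\<integral>X. (dK X Y \<bullet> b) * sig A M pdf X \<partial>lborel)"
  proof (rule Bochner_Integration.integral_cong[OF refl])
    fix X
    show "(\<Sum>e\<in>Basis. (dW b X Y e \<bullet> e) * sig A M pdf X) = (dK X Y \<bullet> b) * sig A M pdf X"
    proof (cases "X \<in> A")
      case True
      then have "X \<notin> E" using A by auto
      then show ?thesis using div_identity[OF _ b, of X Y] by (simp add: sum_distrib_right[symmetric])
    qed (simp add: sig0)
  qed
  finally show ?thesis .
qed

end

context setting begin

lemma Phi_supp:
  assumes A: "A \<subseteq> UNIV - E" and Y: "Y \<notin> SA A"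
  shows "Phi b A M pdf Y = 0"
proof -
  have "Phc b A M pdf Y c = 0" for c
  proof -
    have "Wc b X Y c * sig A M pdf X = 0" for X
    proof (cases "X \<in> A \<and> Wc b X Y c \<noteq> 0")
      case True
      then have "X \<notin> E" using A by auto
      then have "dist X Y \<le> \<delta> X / 2" using W_supp True by blast
      then have "Y \<in> SA A" using True by (auto simp: SA_def)
      with Y show ?thesis by simp
    qed (auto simp: sig0)
    then have "(\<lambda>X. Wc b X Y c * sig A M pdf X) = (\<lambda>X. 0)" by (intro ext)
    then show ?thesis unfolding Phc_def by simp
  qed
  then show ?thesis by (simp add: Phi_def)
qed

lemma Phi_test:
  assumes Cb: "\<forall>X. X \<notin> E \<longrightarrow> norm (grad \<beta> X) \<le> Cb" and Cb0: "Cb \<ge> 0"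
    and A: "compact A" "A \<subseteq> UNIV - E" and pdf: "continuous_on A pdf" and b: "b \<in> Basis"
    and U: "SA A \<subseteq> U"
    and Mdef: "M = real DIM('a) * ((1 + Cb * s) * (3 / m1) ^ DIM('a) * measure lborel (ball (0::'a) 1))"
  shows "Phi b A M pdf \<in> test_fields U"
proof -
  define Bw where "Bw = (1 + Cb * s) * (3 / m1) ^ DIM('a) * measure lborel (ball (0::'a) 1)"
  have Bw: "Bw > 0" unfolding Bw_def using Cb0 m1 m2 by (simp add: add_pos_nonneg)
  have M: "M > 0" using Bw unfolding Mdef Bw_def[symmetric] by simp
  have swp: "continuous_on (UNIV \<times> A) (\<lambda>p. dW b (snd p) (fst p) c)" for c
  proof -
    have "continuous_on (UNIV \<times> A) ((\<lambda>p. dW b (fst p) (snd p) c) \<circ> (\<lambda>p. (snd p, fst p)))"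
      apply (rule continuous_on_compose)
       apply (intro continuous_intros)
      apply (rule continuous_on_subset[OF dW_cont]) using A by auto
    then show ?thesis by (simp add: o_def)
  qed
  have cW: "continuous_on A (\<lambda>X. Wc b X Y c)" for Y c
    by (rule continuous_on_subset[OF cont_slice2[OF W_cont]]) (use A in auto)
  show ?thesis unfolding test_fields_def
  proof (intro CollectI conjI allI ballI)
    fix Y show "Phi b A M pdf differentiable (at Y)"
      using Phi_deriv[OF A pdf M] by (rule differentiableI)
  next
    fix e :: 'a assume e: "e \<in> Basis"
    have "continuous_on UNIV (\<lambda>Y. DPhi b A M pdf Y e)"
      unfolding DPhi_def
    proof (intro continuous_on_sum continuous_on_scaleR continuous_on_const)
      fix c :: 'a
      show "continuous_on UNIV (\<lambda>Y. \<integral>X. (dW b X Y c \<bullet> e) * sig A M pdf X \<partial>lborel)"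
        by (rule cui[OF open_UNIV A(1) sig_int[OF A(1) pdf M] sig0], assumption)
           (intro continuous_intros swp)
    qed
    then show "continuous_on UNIV (\<lambda>Y. frechet_derivative (Phi b A M pdf) (at Y) e)"
      by (simp add: Phi_fd[OF A pdf M])
  next
    have sub: "{X. Phi b A M pdf X \<noteq> 0} \<subseteq> SA A" using Phi_supp[OF A(2)] by blast
    have cl: "closure {X. Phi b A M pdf X \<noteq> 0} \<subseteq> SA A"
      by (rule closure_minimal[OF sub compact_imp_closed[OF SA_compact[OF A]]])
    then show "closure {X. Phi b A M pdf X \<noteq> 0} \<subseteq> U" using U by blast
    have "compact (SA A \<inter> closure {X. Phi b A M pdf X \<noteq> 0})"
      by (rule compact_Int_closed[OF SA_compact[OF A] closed_closure])
    also have "SA A \<inter> closure {X. Phi b A M pdf X \<noteq> 0} = closure {X. Phi b A M pdf X \<noteq> 0}"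
      using cl by blast
    finally show "compact (closure {X. Phi b A M pdf X \<noteq> 0})" .
  next
    fix Y
    have bc: "\<bar>Phc b A M pdf Y c\<bar> \<le> Bw / M" if c: "c \<in> Basis" for c
    proof -
      have i1: "integrable lborel (\<lambda>X. Wc b X Y c * sig A M pdf X)"
        by (rule int_cm[OF A(1) cW sig_int[OF A(1) pdf M] sig0])
      have i2: "integrable lborel (\<lambda>X. indicator A X * \<bar>Wc b X Y c\<bar>)"
        by (rule int_ind_cont[OF A(1)]) (intro continuous_intros cW)
      have "\<bar>Phc b A M pdf Y c\<bar> \<le> (\<integral>X. norm (Wc b X Y c * sig A M pdf X) \<partial>lborel)"
        unfolding Phc_def using integral_norm_bound by (metis real_norm_def)
      also have "\<dots> \<le> (\<integral>X. indicator A X * \<bar>Wc b X Y c\<bar> / M \<partial>lborel)"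
      proof (rule integral_mono)
        show "integrable lborel (\<lambda>X. norm (Wc b X Y c * sig A M pdf X))" using i1 by simp
        show "integrable lborel (\<lambda>X. indicator A X * \<bar>Wc b X Y c\<bar> / M)" using i2 by simp
        fix X
        have "\<bar>sig A M pdf X\<bar> \<le> indicator A X / M" by (rule sig_bd[OF M])
        then have "\<bar>Wc b X Y c\<bar> * \<bar>sig A M pdf X\<bar> \<le> \<bar>Wc b X Y c\<bar> * (indicator A X / M)"
          by (intro mult_left_mono) auto
        then show "norm (Wc b X Y c * sig A M pdf X) \<le> indicator A X * \<bar>Wc b X Y c\<bar> / M"
          by (simp add: abs_mult mult.commute)
      qed
      also have "\<dots> = (\<integral>X. indicator A X * \<bar>Wc b X Y c\<bar> \<partial>lborel) / M" by simp
      also have "\<dots> \<le> Bw / M"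
        using W_int_bound[OF Cb Cb0 A b c, of Y] M by (simp add: Bw_def divide_right_mono)
      finally show ?thesis .
    qed
    have "norm (Phi b A M pdf Y) \<le> (\<Sum>c\<in>Basis. norm (Phc b A M pdf Y c *\<^sub>R c))"
      unfolding Phi_def by (rule norm_sum)
    also have "\<dots> \<le> (\<Sum>c\<in>(Basis::'a set). Bw / M)"
      by (rule sum_mono) (use bc in simp)
    also have "\<dots> = 1" using M Bw unfolding Mdef Bw_def[symmetric] by simp
    finally show "norm (Phi b A M pdf Y) \<le> 1" .
  qed
qed

end

context setting begin

lemma main_identity:
  assumes G0: "loc_integrable (UNIV - E) G0" and A: "compact A" "A \<subseteq> UNIV - E" and b: "b \<in> Basis"
    and M: "M > 0"
    and pdf_def: "pdf = (\<lambda>X. \<integral>Y. (dK X Y \<bullet> b) * G0 Y \<partial>lborel)"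
  shows "(\<integral>Y. G0 Y * divergence (Phi b A M pdf) Y \<partial>lborel) = (\<integral>X. indicator A X * \<bar>pdf X\<bar> \<partial>lborel) / M"
proof -
  have pdf: "continuous_on A pdf"
    unfolding pdf_def by (rule continuous_on_subset[OF pd_cont[OF G0] A(2)])
  define S where "S = SA A"
  have S: "compact S" "S \<subseteq> UNIV - E" unfolding S_def using SA_compact[OF A] SA_sub[OF A(2)] by auto
  define G0S where "G0S Y = indicator S Y * G0 Y" for Y
  have G0S: "integrable lborel G0S" unfolding G0S_def by (rule loc_int_ind[OF G0 S])
  define sg where "sg = sig A M pdf"
  have sgm: "sg \<in> borel_measurable lborel" unfolding sg_def by (rule sig_meas[OF A(1) pdf])
  have inS: "Y \<in> S" if "X \<in> A" "dK X Y \<noteq> 0" for X Y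
  proof -
    have "X \<notin> E" using that A by auto
    then have "dist X Y \<le> \<delta> X / 2" using dK_supp that by blast
    then show ?thesis using that by (auto simp: S_def SA_def)
  qed
  define f where "f X Y = sg X * (dK X Y \<bullet> b) * G0S Y" for X Y
  have s12: "G0 Y * divergence (Phi b A M pdf) Y = (\<integral>X. f X Y \<partial>lborel)" for Y
  proof -
    have "G0 Y * divergence (Phi b A M pdf) Y = G0 Y * (\<integral>X. (dK X Y \<bullet> b) * sg X \<partial>lborel)"
      unfolding Phi_div[OF A pdf M b] sg_def ..
    also have "\<dots> = G0S Y * (\<integral>X. (dK X Y \<bullet> b) * sg X \<partial>lborel)"
    proof (cases "Y \<in> S")
      case False
      have "(dK X Y \<bullet> b) * sg X = 0" for X
        using inS[of X Y] False by (cases "X \<in> A"; cases "dK X Y = 0") (auto simp: sg_def sig0)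
      then have "(\<lambda>X. (dK X Y \<bullet> b) * sg X) = (\<lambda>X. 0)" by (intro ext)
      then show ?thesis by simp
    qed (simp add: G0S_def)
    also have "\<dots> = (\<integral>X. G0S Y * ((dK X Y \<bullet> b) * sg X) \<partial>lborel)" by simp
    also have "\<dots> = (\<integral>X. f X Y \<partial>lborel)" by (simp add: f_def mult_ac)
    finally show ?thesis .
  qed
  obtain D where D: "\<And>X Y. X \<in> A \<Longrightarrow> Y \<in> S \<Longrightarrow> \<bar>dK X Y \<bullet> b\<bar> \<le> D"
  proof -
    have "continuous_on (A \<times> S) (\<lambda>p. dK (fst p) (snd p) \<bullet> b)"
      by (intro continuous_intros continuous_on_subset[OF dK_cont]) (use A in auto)
    then have "compact ((\<lambda>p. dK (fst p) (snd p) \<bullet> b) ` (A \<times> S))"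
      by (rule compact_continuous_image) (intro compact_Times A S)
    then obtain D where "\<forall>x\<in>(\<lambda>p. dK (fst p) (snd p) \<bullet> b) ` (A \<times> S). norm x \<le> D"
      using compact_imp_bounded bounded_iff by metis
    then show ?thesis using that by force
  qed
  have fmeas: "(\<lambda>p. f (fst p) (snd p)) \<in> borel_measurable (lborel \<Otimes>\<^sub>M lborel)"
  proof -
    have m1: "(\<lambda>p. indicator (A \<times> UNIV) p *\<^sub>R (dK (fst p) (snd p) \<bullet> b)) \<in> borel_measurable borel"
    proof (rule borel_measurable_continuous_on_indicator)
      show "A \<times> UNIV \<in> sets borel" using A by (intro borel_closed closed_Times compact_imp_closed) auto
      show "continuous_on (A \<times> UNIV) (\<lambda>p. dK (fst p) (snd p) \<bullet> b)"
        by (intro continuous_intros continuous_on_subset[OF dK_cont]) (use A in auto)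
    qed
    then have m1': "(\<lambda>p. indicator (A \<times> UNIV) p *\<^sub>R (dK (fst p) (snd p) \<bullet> b)) \<in> borel_measurable (lborel \<Otimes>\<^sub>M lborel)"
      by (simp add: lborel_prod)
    have m2: "(\<lambda>p. sg (fst p)) \<in> borel_measurable (lborel \<Otimes>\<^sub>M lborel)" using sgm by measurable
    have m3: "(\<lambda>p. G0S (snd p)) \<in> borel_measurable (lborel \<Otimes>\<^sub>M lborel)"
      using borel_measurable_integrable[OF G0S] by measurable
    have eq: "(\<lambda>p. f (fst p) (snd p)) = (\<lambda>p. sg (fst p) * (indicator (A \<times> UNIV) p *\<^sub>R (dK (fst p) (snd p) \<bullet> b)) * G0S (snd p))"
      by (auto simp: fun_eq_iff f_def sg_def sig0 indicator_def)
    show ?thesis unfolding eq using m1' m2 m3 by measurable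
  qed
  define h where "h X Y = \<bar>D\<bar> / M * (indicator A X * \<bar>G0S Y\<bar>)" for X Y
  have hint: "integrable (lborel \<Otimes>\<^sub>M lborel) (\<lambda>p. h (fst p) (snd p))"
  proof (rule lborel_pair.Fubini_integrable)
    show "(\<lambda>p. h (fst p) (snd p)) \<in> borel_measurable (lborel \<Otimes>\<^sub>M lborel)"
    proof -
      have Ab[measurable]: "A \<in> sets lborel" using A by (simp add: compact_imp_closed borel_closed)
      have G0Sm[measurable]: "G0S \<in> borel_measurable lborel" using G0S by (rule borel_measurable_integrable)
      show ?thesis unfolding h_def by measurable
    qed
    have "integrable lborel (\<lambda>x. \<bar>D\<bar> / M * (\<integral>y. \<bar>G0S y\<bar> \<partial>lborel) * indicator A x)"
      using A by (intro integrable_mult_right integrable_real_indicator emeasure_compact_finite)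
         (auto simp: compact_imp_closed borel_closed)
    then show "integrable lborel (\<lambda>x. \<integral>y. norm (h (fst (x, y)) (snd (x, y))) \<partial>lborel)"
      unfolding h_def using M by (simp add: abs_mult mult_ac)
    show "AE x in lborel. integrable lborel (\<lambda>y. h (fst (x, y)) (snd (x, y)))"
      unfolding h_def using G0S by simp
  qed
  have fint: "integrable (lborel \<Otimes>\<^sub>M lborel) (\<lambda>(X, Y). f X Y)"
  proof (rule Bochner_Integration.integrable_bound[OF hint])
    show "(\<lambda>(X, Y). f X Y) \<in> borel_measurable (lborel \<Otimes>\<^sub>M lborel)"
      using fmeas by (simp add: case_prod_beta')
    show "AE p in lborel \<Otimes>\<^sub>M lborel. norm ((\<lambda>(X, Y). f X Y) p) \<le> norm (h (fst p) (snd p))"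
    proof (rule AE_I2, clarsimp)
      fix X Y
      show "\<bar>f X Y\<bar> \<le> \<bar>h X Y\<bar>"
      proof (cases "X \<in> A \<and> Y \<in> S")
        case True
        have "\<bar>f X Y\<bar> = \<bar>sg X\<bar> * \<bar>dK X Y \<bullet> b\<bar> * \<bar>G0S Y\<bar>" by (simp add: f_def abs_mult)
        also have "\<dots> \<le> (1 / M) * \<bar>D\<bar> * \<bar>G0S Y\<bar>"
        proof (intro mult_right_mono mult_mono)
          show "\<bar>sg X\<bar> \<le> 1 / M" using sig_bd[OF M, of A pdf X] True by (simp add: sg_def)
          show "\<bar>dK X Y \<bullet> b\<bar> \<le> \<bar>D\<bar>" using D[of X Y] True by simp
        qed (use M in auto)
        also have "\<dots> = \<bar>h X Y\<bar>" using True M by (simp add: h_def abs_mult)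
        finally show ?thesis .
      next
        case False
        then have "f X Y = 0" by (auto simp: f_def sg_def sig0 G0S_def)
        then show ?thesis by simp
      qed
    qed
  qed
  have "(\<integral>Y. G0 Y * divergence (Phi b A M pdf) Y \<partial>lborel) = (\<integral>Y. (\<integral>X. f X Y \<partial>lborel) \<partial>lborel)"
    by (simp add: s12)
  also have "\<dots> = (\<integral>X. (\<integral>Y. f X Y \<partial>lborel) \<partial>lborel)"
    by (rule lborel_pair.Fubini_integral[OF fint])
  also have "\<dots> = (\<integral>X. sg X * pdf X \<partial>lborel)"
  proof (rule Bochner_Integration.integral_cong[OF refl])
    fix X
    show "(\<integral>Y. f X Y \<partial>lborel) = sg X * pdf X"
    proof (cases "X \<in> A")
      case True
      have "(\<integral>Y. f X Y \<partial>lborel) = sg X * (\<integral>Y. (dK X Y \<bullet> b) * G0S Y \<partial>lborel)"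
        by (simp add: f_def mult.assoc)
      also have "(\<integral>Y. (dK X Y \<bullet> b) * G0S Y \<partial>lborel) = pdf X"
        unfolding pdf_def
      proof (rule Bochner_Integration.integral_cong[OF refl])
        fix Y show "(dK X Y \<bullet> b) * G0S Y = (dK X Y \<bullet> b) * G0 Y"
          using inS[OF True, of Y] by (cases "dK X Y = 0") (auto simp: G0S_def)
      qed
      finally show ?thesis .
    next
      case False
      then show ?thesis by (simp add: f_def sg_def sig0)
    qed
  qed
  also have "\<dots> = (\<integral>X. indicator A X * \<bar>pdf X\<bar> / M \<partial>lborel)"
    unfolding sg_def using sig_pd[OF M] by simp
  also have "\<dots> = (\<integral>X. indicator A X * \<bar>pdf X\<bar> \<partial>lborel) / M" by simp
  finally show ?thesis .
qed

end

context setting begin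

lemma per_compact:
  assumes G0: "loc_integrable (UNIV - E) G0"
    and Cb: "\<forall>X. X \<notin> E \<longrightarrow> norm (grad \<beta> X) \<le> Cb" and Cb0: "Cb \<ge> 0"
    and A: "compact A" "A \<subseteq> ball z r \<inter> (UNIV - E)" and z: "z \<in> E" and b: "b \<in> Basis"
    and Mdef: "M = real DIM('a) * ((1 + Cb * s) * (3 / m1) ^ DIM('a) * measure lborel (ball (0::'a) 1))"
  shows "(\<integral>\<^sup>+X. ennreal \<bar>\<integral>Y. (dK X Y \<bullet> b) * G0 Y \<partial>lborel\<bar> * indicator A X \<partial>lborel)
     \<le> ennreal M * total_variation G0 (ball z (2 * r) \<inter> (UNIV - E))"
proof -
  define pdf where "pdf = (\<lambda>X. \<integral>Y. (dK X Y \<bullet> b) * G0 Y \<partial>lborel)"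
  have AE: "A \<subseteq> UNIV - E" using A by auto
  have M: "M > 0" unfolding Mdef using Cb0 m1 m2 by (simp add: add_pos_nonneg)
  have pdf: "continuous_on A pdf"
    unfolding pdf_def by (rule continuous_on_subset[OF pd_cont[OF G0] AE])
  have SAU: "SA A \<subseteq> ball z (2 * r) \<inter> (UNIV - E)"
    using SA_ball[of A z r] SA_sub[OF AE] A z by auto
  have T: "Phi b A M pdf \<in> test_fields (ball z (2 * r) \<inter> (UNIV - E))"
    by (rule Phi_test[OF Cb Cb0 A(1) AE pdf b SAU Mdef])
  have eq: "(\<integral>Y. G0 Y * divergence (Phi b A M pdf) Y \<partial>lborel) = (\<integral>X. indicator A X * \<bar>pdf X\<bar> \<partial>lborel) / M"
    by (rule main_identity[OF G0 A(1) AE b M pdf_def])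
  have int: "integrable lborel (\<lambda>X. indicator A X * \<bar>pdf X\<bar>)"
    by (rule int_ind_cont[OF A(1)]) (intro continuous_intros pdf)
  have "(\<integral>\<^sup>+X. ennreal \<bar>pdf X\<bar> * indicator A X \<partial>lborel) = (\<integral>\<^sup>+X. ennreal (indicator A X * \<bar>pdf X\<bar>) \<partial>lborel)"
    by (intro nn_integral_cong) (auto simp: indicator_def)
  also have "\<dots> = ennreal (\<integral>X. indicator A X * \<bar>pdf X\<bar> \<partial>lborel)"
    by (rule nn_integral_eq_integral[OF int]) simp
  also have "\<dots> = ennreal (M * (\<integral>Y. G0 Y * divergence (Phi b A M pdf) Y \<partial>lborel))"
    unfolding eq using M by simp
  also have "\<dots> = ennreal M * ennreal (\<integral>Y. G0 Y * divergence (Phi b A M pdf) Y \<partial>lborel)"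
    using M by (simp add: ennreal_mult')
  also have "\<dots> \<le> ennreal M * total_variation G0 (ball z (2 * r) \<inter> (UNIV - E))"
    unfolding total_variation_def
    by (intro mult_left_mono SUP_upper T) simp
  finally show ?thesis unfolding pdf_def .
qed

lemma per_ball:
  assumes G0: "loc_integrable (UNIV - E) G0"
    and Cb: "\<forall>X. X \<notin> E \<longrightarrow> norm (grad \<beta> X) \<le> Cb" and Cb0: "Cb \<ge> 0"
    and z: "z \<in> E" and r: "r > 0" and b: "b \<in> Basis"
    and Mdef: "M = real DIM('a) * ((1 + Cb * s) * (3 / m1) ^ DIM('a) * measure lborel (ball (0::'a) 1))"
  shows "(\<integral>\<^sup>+X. ennreal \<bar>\<integral>Y. (dK X Y \<bullet> b) * G0 Y \<partial>lborel\<bar> * indicator (ball z r \<inter> (UNIV - E)) X \<partial>lborel)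
     \<le> ennreal M * total_variation G0 (ball z (2 * r) \<inter> (UNIV - E))"
proof -
  define pdf where "pdf = (\<lambda>X. \<integral>Y. (dK X Y \<bullet> b) * G0 Y \<partial>lborel)"
  define Ak where "Ak k = {X. dist z X \<le> r - r / real (Suc (Suc k)) \<and> 1 / real (Suc k) \<le> \<delta> X}" for k
  have Akc: "compact (Ak k)" for k
  proof -
    have "closed (Ak k)" unfolding Ak_def
      by (intro closed_Collect_conj closed_Collect_le continuous_intros
          continuous_on_infdist[OF continuous_on_id])
    moreover have "Ak k \<subseteq> cball z r"
    proof
      fix X assume "X \<in> Ak k"
      moreover have "r / real (Suc (Suc k)) \<ge> 0" using r by simp
      ultimately show "X \<in> cball z r" unfolding Ak_def by auto
    qed
    ultimately show ?thesis using compact_eq_bounded_closed bounded_cball bounded_subset by metis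
  qed
  have Aksub: "Ak k \<subseteq> ball z r \<inter> (UNIV - E)" for k
  proof
    fix X assume X: "X \<in> Ak k"
    have "r / real (Suc (Suc k)) > 0" using r by simp
    then have "dist z X < r" using X by (auto simp: Ak_def)
    moreover have "\<delta> X > 0" using X by (auto simp: Ak_def intro: less_le_trans[rotated])
    then have "X \<notin> E" by (auto simp: infdist_zero)
    ultimately show "X \<in> ball z r \<inter> (UNIV - E)" by auto
  qed
  have inc: "Ak k \<subseteq> Ak (Suc k)" for k
  proof
    fix X assume X: "X \<in> Ak k"
    have "r / real (Suc (Suc (Suc k))) \<le> r / real (Suc (Suc k))" using r by (intro divide_left_mono) auto
    moreover have "1 / real (Suc (Suc k)) \<le> 1 / real (Suc k)" by (intro divide_left_mono) auto
    ultimately show "X \<in> Ak (Suc k)" using X by (auto simp: Ak_def)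
  qed
  have mono: "Ak k \<subseteq> Ak l" if "k \<le> l" for k l
    using lift_Suc_mono_le[of Ak, OF inc that] .
  have cover: "\<exists>k. X \<in> Ak k" if X: "X \<in> ball z r \<inter> (UNIV - E)" for X
  proof -
    have d: "dist z X < r" using X by auto
    have dX: "\<delta> X > 0" using X delta_pos by auto
    have "min (1 - dist z X / r) (\<delta> X) > 0" using d dX r by (simp add: field_simps)
    then obtain n where n: "inverse (real (Suc n)) < min (1 - dist z X / r) (\<delta> X)"
      using reals_Archimedean by blast
    have "1 / real (Suc (Suc n)) \<le> 1 / real (Suc n)" by (intro divide_left_mono) auto
    then have "1 / real (Suc (Suc n)) < 1 - dist z X / r" using n by (simp add: inverse_eq_divide)
    then have "r * (1 / real (Suc (Suc n))) < r * (1 - dist z X / r)" using r by (intro mult_strict_left_mono)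
    moreover have "r * (1 - dist z X / r) = r - dist z X" using r by (simp add: field_simps)
    moreover have "r * (1 / real (Suc (Suc n))) = r / real (Suc (Suc n))" by simp
    ultimately have "dist z X \<le> r - r / real (Suc (Suc n))" by linarith
    moreover have "1 / real (Suc n) \<le> \<delta> X" using n by (simp add: inverse_eq_divide)
    ultimately show ?thesis by (auto simp: Ak_def)
  qed
  define f where "f k X = ennreal \<bar>pdf X\<bar> * indicator (Ak k) X" for k X
  have pdfc: "continuous_on (UNIV - E) pdf" unfolding pdf_def by (rule pd_cont[OF G0])
  have pdfm: "(\<lambda>X. indicator (UNIV - E) X *\<^sub>R pdf X) \<in> borel_measurable borel"
    by (rule borel_measurable_continuous_on_indicator[OF _ pdfc]) (simp add: Om_open borel_open)
  have fm: "f k \<in> borel_measurable lborel" for k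
  proof -
    have "f k = (\<lambda>X. ennreal \<bar>indicator (UNIV - E) X *\<^sub>R pdf X\<bar> * indicator (Ak k) X)"
      using Aksub[of k] by (auto simp: f_def fun_eq_iff indicator_def)
    moreover have "Ak k \<in> sets lborel" using Akc by (simp add: compact_imp_closed borel_closed)
    ultimately show ?thesis using pdfm by simp
  qed
  have finc: "incseq f"
    by (auto simp: incseq_def le_fun_def f_def intro!: mult_left_mono split: split_indicator dest: mono)
  have sup: "(SUP k. f k X) = ennreal \<bar>pdf X\<bar> * indicator (ball z r \<inter> (UNIV - E)) X" for X
  proof (cases "X \<in> ball z r \<inter> (UNIV - E)")
    case True
    then obtain k where k: "X \<in> Ak k" using cover by blast
    show ?thesis
    proof (rule antisym)
      show "(SUP k. f k X) \<le> ennreal \<bar>pdf X\<bar> * indicator (ball z r \<inter> (UNIV - E)) X"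
        using True by (intro SUP_least) (auto simp: f_def indicator_def)
      show "ennreal \<bar>pdf X\<bar> * indicator (ball z r \<inter> (UNIV - E)) X \<le> (SUP k. f k X)"
        by (rule SUP_upper2[of k]) (use True k in \<open>auto simp: f_def\<close>)
    qed
  next
    case False
    then have "f k X = 0" for k using Aksub[of k] by (auto simp: f_def indicator_def)
    then show ?thesis using False by simp
  qed
  have "(\<integral>\<^sup>+X. ennreal \<bar>pdf X\<bar> * indicator (ball z r \<inter> (UNIV - E)) X \<partial>lborel) = (\<integral>\<^sup>+X. (SUP k. f k X) \<partial>lborel)"
    by (simp add: sup)
  also have "\<dots> = (SUP k. integral\<^sup>N lborel (f k))"
    by (rule nn_integral_monotone_convergence_SUP[OF finc fm])
  also have "\<dots> \<le> ennreal M * total_variation G0 (ball z (2 * r) \<inter> (UNIV - E))"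
  proof (rule SUP_least)
    fix k
    show "integral\<^sup>N lborel (f k) \<le> ennreal M * total_variation G0 (ball z (2 * r) \<inter> (UNIV - E))"
      unfolding f_def pdf_def by (rule per_compact[OF G0 Cb Cb0 Akc Aksub z b Mdef])
  qed
  finally show ?thesis unfolding pdf_def .
qed

end

context setting begin

lemma grad_ball:
  assumes G0: "loc_integrable (UNIV - E) G0"
    and Cb: "\<forall>X. X \<notin> E \<longrightarrow> norm (grad \<beta> X) \<le> Cb" and Cb0: "Cb \<ge> 0"
    and z: "z \<in> E" and r: "r > 0"
    and Mdef: "M = real DIM('a) * ((1 + Cb * s) * (3 / m1) ^ DIM('a) * measure lborel (ball (0::'a) 1))"
  shows "(\<integral>\<^sup>+X\<in>ball z r \<inter> (UNIV - E). ennreal (norm (grad (regularize \<beta> \<zeta> G0) X)) \<partial>lborel)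
     \<le> ennreal (real DIM('a) * M) * total_variation G0 (ball z (2 * r) \<inter> (UNIV - E))"
proof -
  define B where "B = ball z r \<inter> (UNIV - E)"
  define T2 where "T2 = total_variation G0 (ball z (2 * r) \<inter> (UNIV - E))"
  define pd where "pd b X = (\<integral>Y. (dK X Y \<bullet> b) * G0 Y \<partial>lborel)" for b X
  have M: "M \<ge> 0" unfolding Mdef using Cb0 m1 m2 by simp
  have gradeq: "grad (regularize \<beta> \<zeta> G0) X = (\<Sum>b\<in>Basis. pd b X *\<^sub>R b)" if X: "X \<notin> E" for X
  proof -
    have "frechet_derivative (regularize \<beta> \<zeta> G0) (at X) = (\<lambda>h. \<integral>Y. (dK X Y \<bullet> h) * G0 Y \<partial>lborel)"
      using frechet_derivative_at[OF G_deriv[OF G0 X]] by simp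
    then show ?thesis by (simp add: grad_def pd_def)
  qed
  have pw: "ennreal (norm (grad (regularize \<beta> \<zeta> G0) X)) * indicator B X
      \<le> (\<Sum>b\<in>Basis. ennreal \<bar>pd b X\<bar> * indicator B X)" for X
  proof (cases "X \<in> B")
    case True
    then have X: "X \<notin> E" by (simp add: B_def)
    have "norm (grad (regularize \<beta> \<zeta> G0) X) \<le> (\<Sum>b\<in>Basis. norm (pd b X *\<^sub>R b))"
      unfolding gradeq[OF X] by (rule norm_sum)
    also have "\<dots> = (\<Sum>b\<in>Basis. \<bar>pd b X\<bar>)" by simp
    finally have "ennreal (norm (grad (regularize \<beta> \<zeta> G0) X)) \<le> ennreal (\<Sum>b\<in>Basis. \<bar>pd b X\<bar>)"
      by (rule ennreal_leI)
    also have "\<dots> = (\<Sum>b\<in>Basis. ennreal \<bar>pd b X\<bar>)" by (rule sum_ennreal[symmetric]) simp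
    finally show ?thesis using True by simp
  qed (simp add: indicator_def)
  have meas: "(\<lambda>X. ennreal \<bar>pd b X\<bar> * indicator B X) \<in> borel_measurable lborel" for b
  proof -
    have pc: "continuous_on (UNIV - E) (pd b)" unfolding pd_def by (rule pd_cont[OF G0])
    have pdfm: "(\<lambda>X. indicator (UNIV - E) X *\<^sub>R pd b X) \<in> borel_measurable borel"
      by (rule borel_measurable_continuous_on_indicator[OF _ pc]) (simp add: Om_open borel_open)
    have "(\<lambda>X. ennreal \<bar>pd b X\<bar> * indicator B X) = (\<lambda>X. ennreal \<bar>indicator (UNIV - E) X *\<^sub>R pd b X\<bar> * indicator B X)"
      by (auto simp: fun_eq_iff indicator_def B_def)
    moreover have "B \<in> sets lborel" by (simp add: B_def Om_open borel_open open_Int)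
    ultimately show ?thesis using pdfm by simp
  qed
  have "(\<integral>\<^sup>+X\<in>B. ennreal (norm (grad (regularize \<beta> \<zeta> G0) X)) \<partial>lborel)
      \<le> (\<integral>\<^sup>+X. (\<Sum>b\<in>Basis. ennreal \<bar>pd b X\<bar> * indicator B X) \<partial>lborel)"
    by (rule nn_integral_mono) (rule pw)
  also have "\<dots> = (\<Sum>b\<in>Basis. (\<integral>\<^sup>+X. ennreal \<bar>pd b X\<bar> * indicator B X \<partial>lborel))"
    by (rule nn_integral_sum) (rule meas)
  also have "\<dots> \<le> (\<Sum>b\<in>(Basis::'a set). ennreal M * T2)"
  proof (rule sum_mono)
    fix b :: 'a assume b: "b \<in> Basis"
    show "(\<integral>\<^sup>+X. ennreal \<bar>pd b X\<bar> * indicator B X \<partial>lborel) \<le> ennreal M * T2"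
      unfolding pd_def B_def T2_def by (rule per_ball[OF G0 Cb Cb0 z r b Mdef])
  qed
  also have "\<dots> = ennreal (real DIM('a) * M) * T2"
    using M by (simp add: ennreal_mult' ennreal_of_nat_eq_real_of_nat[symmetric] mult.assoc)
  finally show ?thesis unfolding B_def T2_def .
qed

lemma final:
  "\<exists>C>0. \<forall>G0 :: 'a \<Rightarrow> real.
     BV_loc (UNIV - E) G0 \<and> carleson_norm E (total_variation G0) < \<infinity> \<longrightarrow>
       (\<forall>X\<in>UNIV - E. regularize \<beta> \<zeta> G0 differentiable (at X)) \<and>
       (SUP z\<in>E. SUP r\<in>{0<..}.
          (\<integral>\<^sup>+ X\<in>ball z r \<inter> (UNIV - E). ennreal (norm (grad (regularize \<beta> \<zeta> G0) X)) \<partial>lborel)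
            / ennreal (r ^ (DIM('a) - 1)))
         \<le> ennreal C * carleson_norm E (total_variation G0)"
proof -
  obtain Cb where Cb0: "Cb \<ge> 0" and Cb: "\<forall>X. X \<notin> E \<longrightarrow> norm (grad \<beta> X) \<le> Cb"
    using gbeta_bd by blast
  define M where "M = real DIM('a) * ((1 + Cb * s) * (3 / m1) ^ DIM('a) * measure lborel (ball (0::'a) 1))"
  have M: "M > 0" unfolding M_def using Cb0 m1 m2 by (simp add: add_pos_nonneg)
  define n where "n = DIM('a) - 1"
  define C where "C = real DIM('a) * M * 2 ^ n"
  have C: "C > 0" using M by (simp add: C_def)
  show ?thesis
  proof (intro exI[of _ C] conjI allI impI C)
    fix G0 :: "'a \<Rightarrow> real"
    assume H: "BV_loc (UNIV - E) G0 \<and> carleson_norm E (total_variation G0) < \<infinity>"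
    then have G0: "loc_integrable (UNIV - E) G0" by (simp add: BV_loc_def)
    show "\<forall>X\<in>UNIV - E. regularize \<beta> \<zeta> G0 differentiable (at X)"
      using G_deriv[OF G0] by (auto intro: differentiableI)
    define cn where "cn = carleson_norm E (total_variation G0)"
    show "(SUP z\<in>E. SUP r\<in>{0<..}.
          (\<integral>\<^sup>+ X\<in>ball z r \<inter> (UNIV - E). ennreal (norm (grad (regularize \<beta> \<zeta> G0) X)) \<partial>lborel)
            / ennreal (r ^ (DIM('a) - 1)))
         \<le> ennreal C * carleson_norm E (total_variation G0)"
      unfolding n_def[symmetric] cn_def[symmetric]
    proof (intro SUP_least)
      fix z r assume z: "z \<in> E" and r: "r \<in> {0::real<..}"
      then have r: "r > 0" by simp
      define I where "I = (\<integral>\<^sup>+ X\<in>ball z r \<inter> (UNIV - E). ennreal (norm (grad (regularize \<beta> \<zeta> G0) X)) \<partial>lborel)"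
      define T2 where "T2 = total_variation G0 (ball z (2 * r) \<inter> (UNIV - E))"
      have I: "I \<le> ennreal (real DIM('a) * M) * T2"
        unfolding I_def T2_def by (rule grad_ball[OF G0 Cb Cb0 z r M_def])
      have h1: "T2 / ennreal ((2 * r) ^ n) \<le> cn"
        unfolding cn_def carleson_norm_def T2_def n_def
        by (rule SUP_upper2[OF z], rule SUP_upper2[of "2 * r"]) (use r in auto)
      have e: "ennreal (real DIM('a) * M) * inverse (ennreal (r ^ n))
          = ennreal C * inverse (ennreal ((2 * r) ^ n))"
      proof -
        have "real DIM('a) * M * inverse (r ^ n) = C * inverse ((2 * r) ^ n)"
          using r by (simp add: C_def power_mult_distrib field_simps)
        then show ?thesis
          using r M C by (simp add: inverse_ennreal ennreal_mult'[symmetric] mult_nonneg_nonneg)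
      qed
      have "I / ennreal (r ^ n) \<le> ennreal (real DIM('a) * M) * T2 / ennreal (r ^ n)"
        by (rule divide_right_mono_ennreal[OF I])
      also have "\<dots> = ennreal C * (T2 / ennreal ((2 * r) ^ n))"
        unfolding divide_ennreal_def using e by (metis mult.assoc mult.commute)
      also have "\<dots> \<le> ennreal C * cn" by (rule mult_left_mono[OF h1]) simp
      finally show "I / ennreal (r ^ n) \<le> ennreal C * cn" .
    qed
  qed
qed

end

theorem lemma3p6:
  fixes E :: "'a::euclidean_space set"
    and \<beta> \<zeta> :: "'a \<Rightarrow> real"
    and m1 m2 :: real
  assumes "closed E"
    and "0 < m1" and "0 < m2"
    and "\<forall>X\<in>UNIV - E. 0 < \<beta> X"
    and "smooth_on (UNIV - E) \<beta>"
    and "\<forall>X\<in>UNIV - E. m1 * infdist X E \<le> \<beta> X \<and> \<beta> X \<le> m2 * infdist X E"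
    and "\<forall>vs. set vs \<subseteq> Basis \<longrightarrow> (\<exists>C. \<forall>X\<in>UNIV - E.
            \<bar>iderv \<beta> vs X\<bar> \<le> C * \<beta> X powr (1 - real (length vs)))"
    and "smooth_on UNIV \<zeta>"
    and "\<forall>X. 0 \<le> \<zeta> X \<and> \<zeta> X \<le> 1"
    and "\<forall>X. \<zeta> X \<noteq> 0 \<longrightarrow> X \<in> ball 0 (1 / (2 * m2))"
    and "(\<zeta> has_integral 1) UNIV"
  shows "\<exists>C>0. \<forall>G0 :: 'a \<Rightarrow> real.
           BV_loc (UNIV - E) G0 \<and> carleson_norm E (total_variation G0) < \<infinity> \<longrightarrow>
             (\<forall>X\<in>UNIV - E. regularize \<beta> \<zeta> G0 differentiable (at X)) \<and>
             (SUP z\<in>E. SUP r\<in>{0<..}.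
                (\<integral>\<^sup>+ X\<in>ball z r \<inter> (UNIV - E). ennreal (norm (grad (regularize \<beta> \<zeta> G0) X)) \<partial>lborel)
                  / ennreal (r ^ (DIM('a) - 1)))
               \<le> ennreal C * carleson_norm E (total_variation G0)"
proof -
  interpret setting E \<beta> \<zeta> m1 m2
    by (rule setting.intro) (fact assms)+
  show ?thesis by (rule final)
qed

end
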